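(* Let $G$ be a nontrivial finite abelian $p$-group of rank $n$ with $n\le p-1$. Then $\tau(G)=n+1$.
   Context: The rank is the minimal number of generators. A projective representation of $G$ is an $\alpha$-representation for some cocycle $\alpha\in Z^2(G,\mathbb{C}^\times)$: a map $\rho:G\to\mathrm{GL}_m(\mathbb{C})$ with $\rho(1)=I$ and $\rho(g)\rho(h)=\alpha(g,h)\rho(gh)$; it is faithful if the only $g$ with $\rho(g)$ scalar is $g=1$. $\tau(G)$ is the least degree of a faithful projective representation of $G$. *)

theory Defs
  imports "Jordan_Normal_Form.Matrix" "HOL-Algebra.Generated_Groups"
begin

definition group_rank :: "('a, 'b) monoid_scheme \<Rightarrow> nat" where
  "group_rank G = (LEAST n. \<exists>S. S \<subseteq> carrier G \<and> finite S \<and> card S = n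
                              \<and> generate G S = carrier G)"

definition cocycle2 :: "('a, 'b) monoid_scheme \<Rightarrow> ('a \<Rightarrow> 'a \<Rightarrow> complex) \<Rightarrow> bool" where
  "cocycle2 G \<alpha> \<longleftrightarrow>
     (\<forall>g\<in>carrier G. \<forall>h\<in>carrier G. \<alpha> g h \<noteq> 0) \<and>
     (\<forall>g\<in>carrier G. \<forall>h\<in>carrier G. \<forall>k\<in>carrier G.
        \<alpha> g h * \<alpha> (g \<otimes>\<^bsub>G\<^esub> h) k = \<alpha> h k * \<alpha> g (h \<otimes>\<^bsub>G\<^esub> k))"

definition alpha_rep :: "('a, 'b) monoid_scheme \<Rightarrow> ('a \<Rightarrow> 'a \<Rightarrow> complex) \<Rightarrow> nat
                          \<Rightarrow> ('a \<Rightarrow> complex mat) \<Rightarrow> bool" where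
  "alpha_rep G \<alpha> m \<rho> \<longleftrightarrow>
     (\<forall>g\<in>carrier G. \<rho> g \<in> carrier_mat m m \<and> invertible_mat (\<rho> g)) \<and>
     \<rho> \<one>\<^bsub>G\<^esub> = 1\<^sub>m m \<and>
     (\<forall>g\<in>carrier G. \<forall>h\<in>carrier G. \<rho> g * \<rho> h = \<alpha> g h \<cdot>\<^sub>m \<rho> (g \<otimes>\<^bsub>G\<^esub> h))"

definition proj_rep :: "('a, 'b) monoid_scheme \<Rightarrow> nat \<Rightarrow> ('a \<Rightarrow> complex mat) \<Rightarrow> bool" where
  "proj_rep G m \<rho> \<longleftrightarrow> (\<exists>\<alpha>. cocycle2 G \<alpha> \<and> alpha_rep G \<alpha> m \<rho>)"

definition faithful_proj_rep :: "('a, 'b) monoid_scheme \<Rightarrow> nat \<Rightarrow> ('a \<Rightarrow> complex mat) \<Rightarrow> bool" where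
  "faithful_proj_rep G m \<rho> \<longleftrightarrow> proj_rep G m \<rho> \<and>
     (\<forall>g\<in>carrier G. (\<exists>c. \<rho> g = c \<cdot>\<^sub>m 1\<^sub>m m) \<longrightarrow> g = \<one>\<^bsub>G\<^esub>)"

definition tau :: "('a, 'b) monoid_scheme \<Rightarrow> nat" where
  "tau G = (LEAST m. \<exists>\<rho>. faithful_proj_rep G m \<rho>)"

end

theory Submission
  imports Defs "Jordan_Normal_Form.VS_Connect" "Jordan_Normal_Form.Determinant"
    "HOL-Algebra.Multiplicative_Group"
begin

hide_const (open) Polynomial.order




lemma invertible_det_nz:
  fixes A :: "complex mat"
  assumes A: "A \<in> carrier_mat n n" and inv: "invertible_mat A"
  shows "det A \<noteq> 0"
proof -
  from inv obtain B where AB: "A * B = 1\<^sub>m n" and BA: "B * A = 1\<^sub>m (dim_row B)"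
    using A unfolding invertible_mat_def inverts_mat_def by auto
  have "dim_col B = n" using arg_cong[OF AB, of dim_col] by simp
  moreover have "dim_row B = n" using arg_cong[OF BA, of dim_col] A by simp
  ultimately have B: "B \<in> carrier_mat n n" by auto
  have "det A * det B = 1" using det_mult[OF A B] AB by simp
  thus ?thesis by auto
qed

lemma invertible_nz_entry:
  fixes A :: "complex mat"
  assumes A: "A \<in> carrier_mat n n" and inv: "invertible_mat A" and n: "n > 0"
  shows "\<exists>i j. i < n \<and> j < n \<and> A $$ (i,j) \<noteq> 0"
proof (rule ccontr)
  assume "\<not> ?thesis"
  hence "A = 0\<^sub>m n n" using A by (intro eq_matI) auto
  hence "det A = 0" using n by (simp add: det_def)
  thus False using invertible_det_nz[OF A inv] by simp
qed

lemma det_nz_entry: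
  fixes A :: "complex mat"
  assumes A: "A \<in> carrier_mat n n" and inv: "det A \<noteq> 0" and n: "n > 0"
  shows "\<exists>i j. i < n \<and> j < n \<and> A $$ (i,j) \<noteq> 0"
proof (rule ccontr)
  assume "\<not> ?thesis"
  hence "A = 0\<^sub>m n n" using A by (intro eq_matI) auto
  hence "det A = 0" using n by (simp add: det_def)
  thus False using inv by simp
qed

lemma smult_cancel_mat:
  fixes A :: "complex mat"
  assumes A: "A \<in> carrier_mat n n" and inv: "det A \<noteq> 0" and n: "n > 0"
    and eq: "c \<cdot>\<^sub>m A = d \<cdot>\<^sub>m A"
  shows "c = d"
proof -
  obtain i j where ij: "i < n" "j < n" "A $$ (i,j) \<noteq> 0" using det_nz_entry[OF A inv n] by auto
  have "(c \<cdot>\<^sub>m A) $$ (i,j) = (d \<cdot>\<^sub>m A) $$ (i,j)" using eq by simp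
  thus ?thesis using ij A by auto
qed


lemma smult_smult_mat: "a \<cdot>\<^sub>m (b \<cdot>\<^sub>m A) = (a * b :: 'a :: comm_ring) \<cdot>\<^sub>m A"
  by (rule eq_matI) (auto simp: mult.assoc)

lemma one_smult_mat': "(1 :: 'a :: ring_1) \<cdot>\<^sub>m A = A"
  by (rule eq_matI) auto

lemma rep_commute:
  fixes G :: "('a, 'b) monoid_scheme" and \<alpha> :: "'a \<Rightarrow> 'a \<Rightarrow> complex"
  assumes cg: "comm_group G" and coc: "cocycle2 G \<alpha>" and rep: "alpha_rep G \<alpha> m \<rho>"
    and m: "0 < m" and mp: "\<And>c::complex. c ^ m = 1 \<Longrightarrow> c ^ order G = 1 \<Longrightarrow> c = 1"
    and g: "g \<in> carrier G" and h: "h \<in> carrier G"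
  shows "\<rho> g * \<rho> h = \<rho> h * \<rho> g"
proof -
  interpret G: comm_group G by fact
  have car: "\<And>x. x \<in> carrier G \<Longrightarrow> \<rho> x \<in> carrier_mat m m" using rep unfolding alpha_rep_def by auto
  have dt: "\<And>x. x \<in> carrier G \<Longrightarrow> det (\<rho> x) \<noteq> 0"
    using rep car invertible_det_nz unfolding alpha_rep_def by blast
  have mul: "\<And>x y. x \<in> carrier G \<Longrightarrow> y \<in> carrier G \<Longrightarrow> \<rho> x * \<rho> y = \<alpha> x y \<cdot>\<^sub>m \<rho> (x \<otimes>\<^bsub>G\<^esub> y)"
    using rep unfolding alpha_rep_def by auto
  have anz: "\<And>x y. x \<in> carrier G \<Longrightarrow> y \<in> carrier G \<Longrightarrow> \<alpha> x y \<noteq> 0"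
    using coc unfolding cocycle2_def by auto
  define c where "c x = \<alpha> g x / \<alpha> x g" for x
  have key: "\<rho> g * \<rho> x = c x \<cdot>\<^sub>m (\<rho> x * \<rho> g)" if x: "x \<in> carrier G" for x
  proof -
    have "\<rho> x * \<rho> g = \<alpha> x g \<cdot>\<^sub>m \<rho> (g \<otimes>\<^bsub>G\<^esub> x)" using mul[OF x g] G.m_comm[OF x g] by simp
    hence "c x \<cdot>\<^sub>m (\<rho> x * \<rho> g) = (c x * \<alpha> x g) \<cdot>\<^sub>m \<rho> (g \<otimes>\<^bsub>G\<^esub> x)" by (simp add: smult_smult_mat)
    also have "c x * \<alpha> x g = \<alpha> g x" using anz[OF x g] by (simp add: c_def)
    finally show ?thesis using mul[OF g x] by simp
  qed
  have cnz: "c x \<noteq> 0" if "x \<in> carrier G" for x using anz that g by (simp add: c_def)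
  have cmul: "c (x \<otimes>\<^bsub>G\<^esub> y) = c x * c y" if x: "x \<in> carrier G" and y: "y \<in> carrier G" for x y
  proof -
    let ?M = "\<rho> (x \<otimes>\<^bsub>G\<^esub> y) * \<rho> g"
    have xy: "x \<otimes>\<^bsub>G\<^esub> y \<in> carrier G" using x y by simp
    have M: "?M \<in> carrier_mat m m" using car[OF xy] car[OF g] by simp
    have dM: "det ?M \<noteq> 0" using det_mult[OF car[OF xy] car[OF g]] dt[OF xy] dt[OF g] by simp
    have "\<alpha> x y \<cdot>\<^sub>m (\<rho> g * \<rho> (x \<otimes>\<^bsub>G\<^esub> y)) = \<rho> g * (\<alpha> x y \<cdot>\<^sub>m \<rho> (x \<otimes>\<^bsub>G\<^esub> y))"
      using mult_smult_distrib[OF car[OF g] car[OF xy]] by simp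
    also have "\<dots> = \<rho> g * (\<rho> x * \<rho> y)" using mul[OF x y] by simp
    also have "\<dots> = (\<rho> g * \<rho> x) * \<rho> y" using assoc_mult_mat[OF car[OF g] car[OF x] car[OF y]] by simp
    also have "\<dots> = (c x \<cdot>\<^sub>m (\<rho> x * \<rho> g)) * \<rho> y" using key[OF x] by simp
    also have "\<dots> = c x \<cdot>\<^sub>m (\<rho> x * (\<rho> g * \<rho> y))"
      using assoc_mult_mat[OF car[OF x] car[OF g] car[OF y]] mult_smult_assoc_mat[OF mult_carrier_mat[OF car[OF x] car[OF g]] car[OF y]] by simp
    also have "\<dots> = c x \<cdot>\<^sub>m (\<rho> x * (c y \<cdot>\<^sub>m (\<rho> y * \<rho> g)))" using key[OF y] by simp
    also have "\<dots> = (c x * c y) \<cdot>\<^sub>m ((\<rho> x * \<rho> y) * \<rho> g)"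
      using mult_smult_distrib[OF car[OF x] mult_carrier_mat[OF car[OF y] car[OF g]]] assoc_mult_mat[OF car[OF x] car[OF y] car[OF g]]
      by (simp add: smult_smult_mat)
    also have "\<dots> = (c x * c y * \<alpha> x y) \<cdot>\<^sub>m ?M"
      using mul[OF x y] mult_smult_assoc_mat[OF car[OF xy] car[OF g]] by (simp add: smult_smult_mat)
    finally have e1: "\<alpha> x y \<cdot>\<^sub>m (\<rho> g * \<rho> (x \<otimes>\<^bsub>G\<^esub> y)) = (c x * c y * \<alpha> x y) \<cdot>\<^sub>m ?M" .
    have "\<alpha> x y \<cdot>\<^sub>m (\<rho> g * \<rho> (x \<otimes>\<^bsub>G\<^esub> y)) = (\<alpha> x y * c (x \<otimes>\<^bsub>G\<^esub> y)) \<cdot>\<^sub>m ?M"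
      using key[OF xy] by (simp add: smult_smult_mat)
    with e1 have "(\<alpha> x y * c (x \<otimes>\<^bsub>G\<^esub> y)) = c x * c y * \<alpha> x y"
      using smult_cancel_mat[OF M dM m] by metis
    thus ?thesis using anz[OF x y] by (simp add: mult.commute)
  qed
  have c1: "c \<one>\<^bsub>G\<^esub> = 1"
  proof -
    have "c \<one>\<^bsub>G\<^esub> = c \<one>\<^bsub>G\<^esub> * c \<one>\<^bsub>G\<^esub>" using cmul[of "\<one>\<^bsub>G\<^esub>" "\<one>\<^bsub>G\<^esub>"] by simp
    thus ?thesis using cnz[of "\<one>\<^bsub>G\<^esub>"] by simp
  qed
  have cpow: "c (x [^]\<^bsub>G\<^esub> (k::nat)) = c x ^ k" if x: "x \<in> carrier G" for x k
    by (induct k) (simp_all add: c1 cmul x)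
  have o1: "c h ^ order G = 1" using cpow[OF h, of "order G"] G.pow_order_eq_1[OF h] c1 by simp
  have "det (\<rho> g * \<rho> h) = det (c h \<cdot>\<^sub>m (\<rho> h * \<rho> g))" using key[OF h] by simp
  hence "det (\<rho> g) * det (\<rho> h) = c h ^ m * (det (\<rho> h) * det (\<rho> g))"
    using car[OF g] car[OF h] by (simp add: det_mult)
  hence "c h ^ m = 1" using dt[OF g] dt[OF h] by (simp add: mult.commute)
  hence "c h = 1" using mp o1 by blast
  thus ?thesis using key[OF h] by (simp add: one_smult_mat')
qed



fun msum :: "nat \<Rightarrow> (nat \<Rightarrow> 'a :: semiring_1 mat) \<Rightarrow> nat \<Rightarrow> 'a mat" where
  "msum m f 0 = 0\<^sub>m m m"
| "msum m f (Suc n) = msum m f n + f n"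

lemma msum_carrier[simp]: "(\<And>j. f j \<in> carrier_mat m m) \<Longrightarrow> msum m f n \<in> carrier_mat m m"
  by (induct n) auto

lemma msum_index: assumes "\<And>j. f j \<in> carrier_mat m m" "i < m" "k < m"
  shows "msum m f n $$ (i,k) = (\<Sum>j<n. f j $$ (i,k))"
proof (induct n)
  case (Suc n)
  have "msum m f n \<in> carrier_mat m m" "f n \<in> carrier_mat m m" using assms by auto
  hence "dim_row (f n) = m" "dim_col (f n) = m" by auto
  thus ?case using Suc assms by simp
qed (use assms in simp)

lemma pow_mat_comm: assumes A: "A \<in> carrier_mat m m" and B: "B \<in> carrier_mat m m"
  and AB: "A * B = B * A"
  shows "A * (B ^\<^sub>m k) = (B ^\<^sub>m k) * A"
proof (induct k)
  case 0 thus ?case using A B by simp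
next
  case (Suc k)
  have Bk: "B ^\<^sub>m k \<in> carrier_mat m m" using B by simp
  have "A * B ^\<^sub>m Suc k = (A * B ^\<^sub>m k) * B" using assoc_mult_mat[OF A Bk B] by simp
  also have "\<dots> = B ^\<^sub>m k * (A * B)" using Suc assoc_mult_mat[OF Bk A B] by simp
  also have "\<dots> = B ^\<^sub>m k * B * A" using AB assoc_mult_mat[OF Bk B A] by simp
  finally show ?case by simp
qed

lemma pow_mat_Suc': assumes A: "A \<in> carrier_mat m m"
  shows "A ^\<^sub>m Suc k = A * A ^\<^sub>m k"
  using pow_mat_comm[OF A A refl, of k] by simp

definition Pm :: "nat \<Rightarrow> complex mat \<Rightarrow> complex \<Rightarrow> nat \<Rightarrow> complex mat" where
  "Pm m M z N = msum m (\<lambda>j. (inverse z) ^ j \<cdot>\<^sub>m (M ^\<^sub>m j)) N"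

lemma Pm_carrier[simp]: "M \<in> carrier_mat m m \<Longrightarrow> Pm m M z N \<in> carrier_mat m m"
  unfolding Pm_def by (rule msum_carrier) simp

lemma Pm_index: assumes "M \<in> carrier_mat m m" "i < m" "k < m"
  shows "Pm m M z N $$ (i,k) = (\<Sum>j<N. (inverse z) ^ j * (M ^\<^sub>m j) $$ (i,k))"
  unfolding Pm_def using assms by (subst msum_index) auto

lemma mult_msum: assumes A: "A \<in> carrier_mat m m" and f: "\<And>j. f j \<in> carrier_mat m m"
  shows "A * msum m f n = msum m (\<lambda>j. A * f j) n"
proof (induct n)
  case 0 thus ?case using A by simp
next
  case (Suc n) thus ?case using A f mult_add_distrib_mat[OF A msum_carrier[OF f] f] by simp
qed

lemma msum_mult: assumes A: "A \<in> carrier_mat m m" and f: "\<And>j. f j \<in> carrier_mat m m"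
  shows "msum m f n * A = msum m (\<lambda>j. f j * A) n"
proof (induct n)
  case 0 thus ?case using A by simp
next
  case (Suc n) thus ?case using A f add_mult_distrib_mat[OF msum_carrier[OF f] f A] by simp
qed

lemma Pm_comm: assumes A: "A \<in> carrier_mat m m" and M: "M \<in> carrier_mat m m" and AM: "A * M = M * A"
  shows "A * Pm m M z N = Pm m M z N * A"
proof -
  have "A * Pm m M z N = msum m (\<lambda>j. A * ((inverse z) ^ j \<cdot>\<^sub>m (M ^\<^sub>m j))) N"
    unfolding Pm_def by (rule mult_msum[OF A]) (use M in simp)
  also have "\<dots> = msum m (\<lambda>j. ((inverse z) ^ j \<cdot>\<^sub>m (M ^\<^sub>m j)) * A) N"
  proof (rule arg_cong[where f = "\<lambda>f. msum m f N"], rule ext)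
    fix j
    have Mj: "M ^\<^sub>m j \<in> carrier_mat m m" using M by simp
    show "A * ((inverse z) ^ j \<cdot>\<^sub>m (M ^\<^sub>m j)) = ((inverse z) ^ j \<cdot>\<^sub>m (M ^\<^sub>m j)) * A"
      using mult_smult_distrib[OF A Mj] mult_smult_assoc_mat[OF Mj A] pow_mat_comm[OF A M AM] by simp
  qed
  also have "\<dots> = Pm m M z N * A" unfolding Pm_def by (rule msum_mult[OF A, symmetric]) (use M in simp)
  finally show ?thesis .
qed

lemma Pm_eigen: assumes M: "M \<in> carrier_mat m m" and MN: "M ^\<^sub>m N = 1\<^sub>m m" and zN: "z ^ N = 1"
  and N: "N > 0"
  shows "M * Pm m M z N = z \<cdot>\<^sub>m Pm m M z N"
proof -
  have z0: "z \<noteq> 0" using zN N by (cases "z = 0") (auto simp: zero_power)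
  obtain K where K: "N = Suc K" using N by (cases N) auto
  have "M * Pm m M z N = msum m (\<lambda>j. M * ((inverse z) ^ j \<cdot>\<^sub>m (M ^\<^sub>m j))) N"
    unfolding Pm_def by (rule mult_msum[OF M]) (use M in simp)
  also have "\<dots> = msum m (\<lambda>j. (inverse z) ^ j \<cdot>\<^sub>m (M ^\<^sub>m Suc j)) N"
  proof (rule arg_cong[where f = "\<lambda>f. msum m f N"], rule ext)
    fix j
    have Mj: "M ^\<^sub>m j \<in> carrier_mat m m" using M by simp
    show "M * ((inverse z) ^ j \<cdot>\<^sub>m (M ^\<^sub>m j)) = (inverse z) ^ j \<cdot>\<^sub>m (M ^\<^sub>m Suc j)"
      using mult_smult_distrib[OF M Mj] pow_mat_Suc'[OF M, of j] by simp
  qed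
  finally have e: "M * Pm m M z N = msum m (\<lambda>j. (inverse z) ^ j \<cdot>\<^sub>m (M ^\<^sub>m Suc j)) N" .
  show ?thesis
  proof (rule eq_matI)
    fix i k assume i: "i < dim_row (z \<cdot>\<^sub>m Pm m M z N)" and k: "k < dim_col (z \<cdot>\<^sub>m Pm m M z N)"
    have "Pm m M z N \<in> carrier_mat m m" using M by simp
    hence i: "i < m" and k: "k < m" using i k by auto
    define S where "S j = (M ^\<^sub>m j) $$ (i,k)" for j
    have SN: "S N = S 0" unfolding S_def using MN M i k by simp
    have w: "(inverse z) ^ K = z"
    proof -
      have "(inverse z) ^ K * inverse z = (inverse z) ^ Suc K" by (simp only: power_Suc2)
      also have "\<dots> = inverse (z ^ Suc K)" by (rule power_inverse)
      also have "\<dots> = 1" using zN K by simp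
      finally have "(inverse z) ^ K * inverse z = 1" .
      thus ?thesis using z0 by (simp add: field_simps)
    qed
    have "(M * Pm m M z N) $$ (i,k) = (\<Sum>j<N. (inverse z) ^ j * S (Suc j))"
      unfolding e S_def using M i k by (subst msum_index) auto
    also have "\<dots> = (\<Sum>j<K. (inverse z) ^ j * S (Suc j)) + z * S 0"
      using K SN w by simp
    also have "\<dots> = z * (\<Sum>j<N. (inverse z) ^ j * S j)"
    proof -
      have "z * (\<Sum>j<N. (inverse z) ^ j * S j) = z * (S 0 + (\<Sum>j<K. (inverse z) ^ Suc j * S (Suc j)))"
        unfolding K by (subst sum.lessThan_Suc_shift) simp
      also have "\<dots> = z * S 0 + (\<Sum>j<K. (z * (inverse z) ^ Suc j) * S (Suc j))"
        by (simp add: distrib_left sum_distrib_left mult.assoc)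
      also have "\<dots> = z * S 0 + (\<Sum>j<K. (inverse z) ^ j * S (Suc j))"
        using z0 by (intro arg_cong2[where f="(+)"] refl sum.cong) (auto simp: mult.assoc[symmetric])
      finally show ?thesis by simp
    qed
    also have "\<dots> = (z \<cdot>\<^sub>m Pm m M z N) $$ (i,k)"
      using M i k carrier_matD[OF Pm_carrier[OF M, of z N]] by (simp add: Pm_index S_def)
    finally show "(M * Pm m M z N) $$ (i,k) = (z \<cdot>\<^sub>m Pm m M z N) $$ (i,k)" .
  qed (use M carrier_matD[OF Pm_carrier[OF M, of z N]] in auto)
qed


lemma prim_root:
  assumes N: "N > 0"
  shows "cis (2 * pi / N) ^ N = 1" "\<And>j. 0 < j \<Longrightarrow> j < N \<Longrightarrow> cis (2 * pi / N) ^ j \<noteq> 1"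
proof -
  have pw: "cis (2 * pi / N) ^ j = cis (2 * pi * real j / real N)" for j
    by (simp add: DeMoivre mult_ac)
  show "cis (2 * pi / N) ^ N = 1" unfolding pw using N by (simp add: complex_eq_iff)
  fix j assume j: "0 < j" "j < N"
  have inj: "inj_on (\<lambda>k. cis (2 * pi * real k / real N)) {..<N}"
    using bij_betw_roots_unity[OF N] unfolding bij_betw_def by blast
  show "cis (2 * pi / N) ^ j \<noteq> 1"
  proof
    assume "cis (2 * pi / N) ^ j = 1"
    hence "cis (2 * pi * real j / real N) = cis (2 * pi * real 0 / real N)" unfolding pw by simp
    hence "j = 0" using inj j N unfolding inj_on_def by blast
    thus False using j by simp
  qed
qed

lemma geom_root_sum:
  fixes w :: complex
  assumes "w ^ N = 1" "w \<noteq> 1"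
  shows "(\<Sum>l<N. w ^ l) = 0"
  using assms by (simp add: geometric_sum)

lemma Pm_sum:
  assumes M: "M \<in> carrier_mat m m" and N: "N > 0"
  defines "\<omega> \<equiv> cis (2 * pi / N)"
  shows "msum m (\<lambda>l. Pm m M (\<omega> ^ l) N) N = of_nat N \<cdot>\<^sub>m 1\<^sub>m m"
proof (rule eq_matI)
  fix i k assume "i < dim_row (of_nat N \<cdot>\<^sub>m 1\<^sub>m m :: complex mat)" "k < dim_col (of_nat N \<cdot>\<^sub>m 1\<^sub>m m :: complex mat)"
  hence i: "i < m" and k: "k < m" by auto
  define S where "S j = (M ^\<^sub>m j) $$ (i,k)" for j
  have inner: "(\<Sum>l<N. (inverse (\<omega> ^ j)) ^ l) = (if j = 0 then of_nat N else 0)" if j: "j < N" for j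
  proof (cases "j = 0")
    case False
    have w1: "\<omega> ^ j \<noteq> 1" using prim_root(2)[OF N, of j] j False unfolding \<omega>_def by simp
    have wN: "(\<omega> ^ j) ^ N = 1" using prim_root(1)[OF N] unfolding \<omega>_def
      by (simp add: power_mult[symmetric] mult.commute[of j] power_mult)
    have "(inverse (\<omega> ^ j)) ^ N = 1" using wN by (simp add: power_inverse)
    moreover have "inverse (\<omega> ^ j) \<noteq> 1" using w1 by (metis inverse_1 inverse_inverse_eq)
    ultimately show ?thesis using False geom_root_sum by simp
  qed simp
  have "msum m (\<lambda>l. Pm m M (\<omega> ^ l) N) N $$ (i,k) = (\<Sum>l<N. \<Sum>j<N. (inverse (\<omega> ^ l)) ^ j * S j)"
    using M i k by (subst msum_index) (auto simp: Pm_index S_def)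
  also have "\<dots> = (\<Sum>j<N. (\<Sum>l<N. (inverse (\<omega> ^ j)) ^ l) * S j)"
    by (subst sum.swap) (simp add: sum_distrib_right sum_distrib_left power_inverse power_mult[symmetric] mult.commute)
  also have "\<dots> = (\<Sum>j<N. (if j = 0 then of_nat N * S 0 else 0))"
    by (rule sum.cong) (auto simp: inner)
  also have "\<dots> = of_nat N * S 0" using N by (simp add: sum.delta)
  also have "\<dots> = (of_nat N \<cdot>\<^sub>m 1\<^sub>m m) $$ (i,k)" using i k M by (simp add: S_def)
  finally show "msum m (\<lambda>l. Pm m M (\<omega> ^ l) N) N $$ (i,k) = (of_nat N \<cdot>\<^sub>m 1\<^sub>m m) $$ (i,k)" .
next
  have "msum m (\<lambda>l. Pm m M (\<omega> ^ l) N) N \<in> carrier_mat m m" using M by (intro msum_carrier) simp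
  thus "dim_row (msum m (\<lambda>l. Pm m M (\<omega> ^ l) N) N) = dim_row (of_nat N \<cdot>\<^sub>m 1\<^sub>m m :: complex mat)"
    "dim_col (msum m (\<lambda>l. Pm m M (\<omega> ^ l) N) N) = dim_col (of_nat N \<cdot>\<^sub>m 1\<^sub>m m :: complex mat)" by auto
qed



abbreviation cspan :: "nat \<Rightarrow> complex vec set \<Rightarrow> complex vec set" where
  "cspan m U \<equiv> module.span (class_ring :: complex ring) (module_vec TYPE(complex) m) U"

lemma cspan_facts:
  assumes U: "U \<subseteq> carrier_vec m"
  shows "0\<^sub>v m \<in> cspan m U"
    and "\<And>v w. v \<in> cspan m U \<Longrightarrow> w \<in> cspan m U \<Longrightarrow> v + w \<in> cspan m U"
    and "\<And>v c. v \<in> cspan m U \<Longrightarrow> c \<cdot>\<^sub>v v \<in> cspan m U"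
    and "\<And>v. v \<in> cspan m U \<Longrightarrow> v \<in> carrier_vec m"
    and "U \<subseteq> cspan m U"
proof -
  interpret V: vec_space "TYPE(complex)" m .
  show "0\<^sub>v m \<in> cspan m U" using V.span_zero by simp
  show "\<And>v w. v \<in> cspan m U \<Longrightarrow> w \<in> cspan m U \<Longrightarrow> v + w \<in> cspan m U"
    using V.span_add1[OF U] by simp
  show "\<And>v c. v \<in> cspan m U \<Longrightarrow> c \<cdot>\<^sub>v v \<in> cspan m U"
    using V.smult_in_span[OF U] by simp
  show "\<And>v. v \<in> cspan m U \<Longrightarrow> v \<in> carrier_vec m" using V.span_closed[OF U] by simp
  show "U \<subseteq> cspan m U" using V.in_own_span[OF U] by simp
qed


lemma smult_mat_vec:
  assumes A: "A \<in> carrier_mat nr nc" and v: "v \<in> carrier_vec nc"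
  shows "(k \<cdot>\<^sub>m A) *\<^sub>v v = (k :: 'a :: comm_ring) \<cdot>\<^sub>v (A *\<^sub>v v)"
proof (rule eq_vecI)
  fix i assume "i < dim_vec (k \<cdot>\<^sub>v (A *\<^sub>v v))"
  hence i: "i < nr" using A by simp
  have "((k \<cdot>\<^sub>m A) *\<^sub>v v) $ i = (\<Sum>j<nc. k * A $$ (i,j) * v $ j)"
    using A v i by (simp add: scalar_prod_def row_def atLeast0LessThan)
  also have "\<dots> = k * (\<Sum>j<nc. A $$ (i,j) * v $ j)" by (simp add: sum_distrib_left mult.assoc)
  also have "\<dots> = (k \<cdot>\<^sub>v (A *\<^sub>v v)) $ i"
    using A v i by (simp add: scalar_prod_def row_def atLeast0LessThan)
  finally show "((k \<cdot>\<^sub>m A) *\<^sub>v v) $ i = (k \<cdot>\<^sub>v (A *\<^sub>v v)) $ i" .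
qed (use A in simp)

lemma zero_mat_mult_vec: "v \<in> carrier_vec nc \<Longrightarrow> 0\<^sub>m nr nc *\<^sub>v v = (0\<^sub>v nr :: 'a :: semiring_0 vec)"
  by (intro eq_vecI) (auto simp: scalar_prod_def)

lemma cspan_minus:
  assumes U: "U \<subseteq> carrier_vec m" and v: "v \<in> cspan m U" and w: "w \<in> cspan m U"
  shows "v - w \<in> cspan m U"
proof -
  have vc: "v \<in> carrier_vec m" and wc: "w \<in> carrier_vec m" using cspan_facts(4)[OF U] v w by auto
  have "v - w = v + (-1) \<cdot>\<^sub>v w" using vc wc by (intro eq_vecI) auto
  thus ?thesis using cspan_facts(2,3)[OF U] v w by simp
qed

lemma cspan_smult_notin:
  assumes U: "U \<subseteq> carrier_vec m" and u: "u \<notin> cspan m U" and cu: "c \<cdot>\<^sub>v u \<in> cspan m U"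
    and uc: "u \<in> carrier_vec m"
  shows "c = 0"
proof (rule ccontr)
  assume c: "c \<noteq> 0"
  have "inverse c \<cdot>\<^sub>v (c \<cdot>\<^sub>v u) = u" using c uc by (intro eq_vecI) auto
  thus False using cspan_facts(3)[OF U cu, of "inverse c"] u by simp
qed

lemma msum_mult_vec_span:
  assumes U: "U \<subseteq> carrier_vec m" and f: "\<And>j. f j \<in> carrier_mat m m"
    and v: "v \<in> carrier_vec m"
    and fs: "\<And>j. j < k \<Longrightarrow> f j *\<^sub>v v \<in> cspan m U"
  shows "msum m f k *\<^sub>v v \<in> cspan m U"
  using fs
proof (induct k)
  case 0 thus ?case using cspan_facts(1)[OF U] v zero_mat_mult_vec[OF v, of m] by simp
next
  case (Suc k)
  have "msum m f (Suc k) *\<^sub>v v = msum m f k *\<^sub>v v + f k *\<^sub>v v"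
    using add_mult_distrib_mat_vec[OF msum_carrier[OF f] f v] by simp
  thus ?case using Suc cspan_facts(2)[OF U] by simp
qed

lemma pow_mult_vec_span:
  assumes U: "U \<subseteq> carrier_vec m" and A: "A \<in> carrier_mat m m"
    and inv: "\<And>v. v \<in> cspan m U \<Longrightarrow> A *\<^sub>v v \<in> cspan m U"
    and v: "v \<in> cspan m U"
  shows "(A ^\<^sub>m k) *\<^sub>v v \<in> cspan m U"
proof (induct k)
  case 0 thus ?case using v cspan_facts(4)[OF U v] A by simp
next
  case (Suc k)
  have vc: "v \<in> carrier_vec m" using cspan_facts(4)[OF U v] .
  have "(A ^\<^sub>m Suc k) *\<^sub>v v = A *\<^sub>v ((A ^\<^sub>m k) *\<^sub>v v)"
    using pow_mat_Suc'[OF A, of k] assoc_mult_mat_vec[OF A pow_carrier_mat[OF A] vc] by simp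
  thus ?case using inv Suc by simp
qed

lemma Pm_span:
  assumes U: "U \<subseteq> carrier_vec m" and A: "A \<in> carrier_mat m m"
    and inv: "\<And>v. v \<in> cspan m U \<Longrightarrow> A *\<^sub>v v \<in> cspan m U"
    and v: "v \<in> cspan m U"
  shows "Pm m A z N *\<^sub>v v \<in> cspan m U"
  unfolding Pm_def
proof (rule msum_mult_vec_span[OF U])
  show "v \<in> carrier_vec m" using cspan_facts(4)[OF U v] .
  fix j
  show "inverse z ^ j \<cdot>\<^sub>m A ^\<^sub>m j \<in> carrier_mat m m" using A by simp
  have "(inverse z ^ j \<cdot>\<^sub>m A ^\<^sub>m j) *\<^sub>v v = inverse z ^ j \<cdot>\<^sub>v ((A ^\<^sub>m j) *\<^sub>v v)"
    using smult_mat_vec[OF pow_carrier_mat[OF A] \<open>v \<in> carrier_vec m\<close>] .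
  thus "(inverse z ^ j \<cdot>\<^sub>m A ^\<^sub>m j) *\<^sub>v v \<in> cspan m U"
    using pow_mult_vec_span[OF U A inv v] cspan_facts(3)[OF U] by simp
qed

lemma common_eigen_mod:
  fixes U :: "complex vec set" and M :: "'i \<Rightarrow> complex mat"
  assumes U: "U \<subseteq> carrier_vec m" and F: "finite F"
    and Mc: "\<And>x. x \<in> F \<Longrightarrow> M x \<in> carrier_mat m m"
    and comm: "\<And>x y. x \<in> F \<Longrightarrow> y \<in> F \<Longrightarrow> M x * M y = M y * M x"
    and pw: "\<And>x. x \<in> F \<Longrightarrow> M x ^\<^sub>m N = 1\<^sub>m m"
    and N: "N > 0"
    and inv: "\<And>x v. x \<in> F \<Longrightarrow> v \<in> cspan m U \<Longrightarrow> M x *\<^sub>v v \<in> cspan m U"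
    and u0: "u0 \<in> carrier_vec m" "u0 \<notin> cspan m U"
  shows "\<exists>u lam. u \<in> carrier_vec m \<and> u \<notin> cspan m U \<and> (\<forall>x\<in>F. M x *\<^sub>v u - lam x \<cdot>\<^sub>v u \<in> cspan m U)"
proof -
  define \<omega> where "\<omega> = cis (2 * pi / N)"
  have "\<exists>u lam. u \<in> carrier_vec m \<and> u \<notin> cspan m U \<and> (\<forall>x\<in>F'. M x *\<^sub>v u - lam x \<cdot>\<^sub>v u \<in> cspan m U)"
    if "F' \<subseteq> F" for F'
  using finite_subset[OF that F] that
  proof (induct F' rule: finite_induct)
    case empty thus ?case using u0 by blast
  next
    case (insert a F')
    then obtain u lam where u: "u \<in> carrier_vec m" "u \<notin> cspan m U"
      and ul: "\<forall>x\<in>F'. M x *\<^sub>v u - lam x \<cdot>\<^sub>v u \<in> cspan m U" by auto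
    have a: "a \<in> F" using insert by auto
    have Ma: "M a \<in> carrier_mat m m" using Mc[OF a] .
    let ?Q = "\<lambda>l. Pm m (M a) (\<omega> ^ l) N"
    have Qc: "\<And>l. ?Q l \<in> carrier_mat m m" using Ma by simp
    have "\<exists>l<N. ?Q l *\<^sub>v u \<notin> cspan m U"
    proof (rule ccontr)
      assume "\<not> ?thesis"
      hence "msum m ?Q N *\<^sub>v u \<in> cspan m U"
        by (intro msum_mult_vec_span[OF U Qc u(1)]) auto
      hence "(of_nat N \<cdot>\<^sub>m 1\<^sub>m m) *\<^sub>v u \<in> cspan m U"
        using Pm_sum[OF Ma N] unfolding \<omega>_def by simp
      moreover have "(of_nat N \<cdot>\<^sub>m 1\<^sub>m m) *\<^sub>v u = of_nat N \<cdot>\<^sub>v u"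
        using u(1) smult_mat_vec[OF one_carrier_mat u(1)] by simp
      ultimately have "of_nat N \<cdot>\<^sub>v u \<in> cspan m U" by simp
      from cspan_smult_notin[OF U u(2) this u(1)] N show False by simp
    qed
    then obtain l where l: "l < N" and Qu: "?Q l *\<^sub>v u \<notin> cspan m U" by auto
    define u' where "u' = ?Q l *\<^sub>v u"
    have u'c: "u' \<in> carrier_vec m" unfolding u'_def using mult_mat_vec_carrier[OF Qc u(1)] .
    have wN: "(\<omega> ^ l) ^ N = 1" using prim_root(1)[OF N] unfolding \<omega>_def
      by (simp add: power_mult[symmetric] mult.commute[of l] power_mult)
    have eig: "M a *\<^sub>v u' = \<omega> ^ l \<cdot>\<^sub>v u'"
    proof -
      have "M a *\<^sub>v u' = (M a * ?Q l) *\<^sub>v u" unfolding u'_def using assoc_mult_mat_vec[OF Ma Qc u(1)] by simp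
      also have "\<dots> = (\<omega> ^ l \<cdot>\<^sub>m ?Q l) *\<^sub>v u" using Pm_eigen[OF Ma pw[OF a] wN N] by simp
      also have "\<dots> = \<omega> ^ l \<cdot>\<^sub>v u'" unfolding u'_def
        using smult_mat_vec[OF Qc u(1)] .
      finally show ?thesis .
    qed
    show ?case
    proof (intro exI[of _ u'] exI[of _ "lam(a := \<omega> ^ l)"] conjI ballI)
      show "u' \<in> carrier_vec m" by fact
      show "u' \<notin> cspan m U" unfolding u'_def by fact
      fix x assume x: "x \<in> insert a F'"
      show "M x *\<^sub>v u' - (lam(a := \<omega> ^ l)) x \<cdot>\<^sub>v u' \<in> cspan m U"
      proof (cases "x = a")
        case True
        have "M x *\<^sub>v u' - (lam(a := \<omega> ^ l)) x \<cdot>\<^sub>v u' = 0\<^sub>v m"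
          using True eig u'c Ma by (intro eq_vecI) auto
        thus ?thesis using cspan_facts(1)[OF U] by simp
      next
        case False
        hence xF: "x \<in> F'" and xF2: "x \<in> F" using x insert by auto
        have Mx: "M x \<in> carrier_mat m m" using Mc[OF xF2] .
        have "M x *\<^sub>v u' = (M x * ?Q l) *\<^sub>v u" unfolding u'_def using assoc_mult_mat_vec[OF Mx Qc u(1)] by simp
        also have "\<dots> = (?Q l * M x) *\<^sub>v u" using Pm_comm[OF Mx Ma comm[OF xF2 a]] by simp
        also have "\<dots> = ?Q l *\<^sub>v (M x *\<^sub>v u)" using assoc_mult_mat_vec[OF Qc Mx u(1)] by simp
        finally have e1: "M x *\<^sub>v u' = ?Q l *\<^sub>v (M x *\<^sub>v u)" .
        have e2: "lam x \<cdot>\<^sub>v u' = ?Q l *\<^sub>v (lam x \<cdot>\<^sub>v u)" unfolding u'_def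
          using mult_mat_vec[OF Qc u(1)] by simp
        have "M x *\<^sub>v u' - (lam(a := \<omega> ^ l)) x \<cdot>\<^sub>v u' = ?Q l *\<^sub>v (M x *\<^sub>v u - lam x \<cdot>\<^sub>v u)"
          using False e1 e2 mult_minus_distrib_mat_vec[OF Qc, of "M x *\<^sub>v u" "lam x \<cdot>\<^sub>v u"] Mx u by simp
        also have "\<dots> \<in> cspan m U"
          by (rule Pm_span[OF U Ma]) (use inv[OF a] ul xF in auto)
        finally show ?thesis .
      qed
    qed
  qed
  from this[OF order_refl] show ?thesis .
qed



abbreviation clin_dep :: "nat \<Rightarrow> complex vec set \<Rightarrow> bool" where
  "clin_dep m U \<equiv> module.lin_dep (class_ring :: complex ring) (module_vec TYPE(complex) m) U"

lemma fix_span: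
  assumes U: "U \<subseteq> carrier_vec m" and A: "A \<in> carrier_mat m m"
    and fx: "\<And>x. x \<in> U \<Longrightarrow> A *\<^sub>v x = x" and x: "x \<in> cspan m U"
  shows "A *\<^sub>v x = x"
proof -
  interpret V: vec_space "TYPE(complex)" m .
  let ?H = "{x \<in> carrier_vec m. A *\<^sub>v x = x}"
  have "submodule class_ring ?H V.V"
  proof (rule submodule.intro)
    show "module class_ring V.V" by (rule vec_module)
    show "?H \<subseteq> carrier V.V" by auto
    have "A *\<^sub>v 0\<^sub>v m = 0\<^sub>v m" using A by (intro eq_vecI) auto
    thus "\<zero>\<^bsub>V.V\<^esub> \<in> ?H" by simp
    fix a b assume a: "a \<in> ?H" and b: "b \<in> ?H"
    show "a \<oplus>\<^bsub>V.V\<^esub> b \<in> ?H" using a b A by (simp add: mult_add_distrib_mat_vec[OF A])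
  next
    fix c a assume a: "a \<in> ?H"
    show "c \<odot>\<^bsub>V.V\<^esub> a \<in> ?H" using a A mult_mat_vec[OF A, of a c] by simp
  qed
  hence "cspan m U \<subseteq> ?H" using V.span_is_subset[of U ?H] fx U by auto
  thus ?thesis using x by auto
qed

lemma finite_mult_cyclic:
  fixes A :: "complex set"
  assumes fin: "finite A" and ne: "A \<noteq> {}" and z: "0 \<notin> A"
    and cl: "\<And>a b. a \<in> A \<Longrightarrow> b \<in> A \<Longrightarrow> a * b \<in> A"
  shows "\<exists>a\<in>A. \<forall>b\<in>A. \<exists>j::nat. b = a ^ j"
proof -
  define N where "N = card A"
  have N: "N > 0" using fin ne by (simp add: N_def card_gt_0_iff)
  have pw: "b ^ N = 1" if b: "b \<in> A" for b
  proof -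
    have inj: "inj_on (\<lambda>x. b * x) A" using z b unfolding inj_on_def by auto
    have sub: "(\<lambda>x. b * x) ` A \<subseteq> A" using cl b by auto
    have cd: "card ((\<lambda>x. b * x) ` A) = card A" by (rule card_image[OF inj])
    have eq: "(\<lambda>x. b * x) ` A = A" by (rule card_subset_eq[OF fin sub cd])
    have "prod (\<lambda>x. x) ((\<lambda>x. b * x) ` A) = prod ((\<lambda>x. x) \<circ> (\<lambda>x. b * x)) A"
      by (rule prod.reindex[OF inj])
    hence "prod (\<lambda>x. x) A = prod (\<lambda>x. b * x) A" unfolding eq comp_def .
    also have "\<dots> = prod (\<lambda>x. b) A * prod (\<lambda>x. x) A" by (rule prod.distrib)
    also have "prod (\<lambda>x. b) A = b ^ N" unfolding N_def by (rule prod_constant)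
    finally have e: "prod (\<lambda>x. x) A = b ^ N * prod (\<lambda>x. x) A" .
    have nz: "prod (\<lambda>x. x) A \<noteq> 0" using z fin by (simp add: prod_zero_iff)
    show ?thesis using e nz by simp
  qed
  have sub: "A \<subseteq> {z. z ^ N = 1}" using pw by auto
  have N1: "1 \<le> N" using N by simp
  have finR: "finite {z::complex. z ^ N = 1}" by (rule finite_roots_unity[OF N1])
  have cdR: "card A = card {z::complex. z ^ N = 1}" using card_roots_unity_eq[OF N] N_def by simp
  have eqA: "A = {z. z ^ N = 1}" by (rule card_subset_eq[OF finR sub cdR])
  define \<omega> where "\<omega> = cis (2 * pi / N)"
  have pw2: "cis (2 * pi * real k / real N) = \<omega> ^ k" for k
    by (simp add: \<omega>_def DeMoivre mult_ac)
  have "\<omega> ^ N = 1" using prim_root(1)[OF N] \<omega>_def by simp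
  hence "\<omega> \<in> A" using eqA by simp
  moreover have "\<forall>b\<in>A. \<exists>j::nat. b = \<omega> ^ j"
  proof
    fix b assume "b \<in> A"
    hence "b \<in> (\<lambda>k. cis (2 * pi * real k / real N)) ` {..<N}"
      using bij_betw_roots_unity[OF N] eqA unfolding bij_betw_def by simp
    thus "\<exists>j::nat. b = \<omega> ^ j" using pw2 by auto
  qed
  ultimately show ?thesis by blast
qed

locale genrep = comm_group G for G :: "('a, 'b) monoid_scheme" (structure) +
  fixes m :: nat and \<psi> :: "'a \<Rightarrow> complex mat"
  assumes fin: "finite (carrier G)"
    and psi_car: "g \<in> carrier G \<Longrightarrow> \<psi> g \<in> carrier_mat m m"
    and psi_one: "\<psi> \<one> = 1\<^sub>m m"
    and psi_mult: "g \<in> carrier G \<Longrightarrow> h \<in> carrier G \<Longrightarrow> \<psi> (g \<otimes> h) = \<psi> g * \<psi> h"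
    and faithful: "g \<in> carrier G \<Longrightarrow> \<psi> g = 1\<^sub>m m \<Longrightarrow> g = \<one>"
begin

definition Stab :: "complex vec set \<Rightarrow> 'a set" where
  "Stab U = {g \<in> carrier G. \<forall>x\<in>cspan m U. \<psi> g *\<^sub>v x = x}"

lemma psi_comm: "g \<in> carrier G \<Longrightarrow> h \<in> carrier G \<Longrightarrow> \<psi> g * \<psi> h = \<psi> h * \<psi> g"
  using psi_mult m_comm by metis

lemma psi_pow: assumes g: "g \<in> carrier G" shows "\<psi> (g [^] (k::nat)) = \<psi> g ^\<^sub>m k"
proof (induct k)
  case 0 thus ?case using psi_one psi_car[OF g] by simp
next
  case (Suc k) thus ?case using psi_mult[of "g [^] k" g] g by simp
qed

lemma psi_order: "g \<in> carrier G \<Longrightarrow> \<psi> g ^\<^sub>m order G = 1\<^sub>m m"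
  using psi_pow[of g "order G"] pow_order_eq_1 psi_one by simp

lemma order_pos: "order G > 0"
  using fin one_closed unfolding Coset.order_def by (auto simp: card_gt_0_iff)

lemma Stab_subgroup:
  assumes U: "U \<subseteq> carrier_vec m"
  shows "subgroup (Stab U) G"
proof (rule subgroupI)
  show "Stab U \<subseteq> carrier G" unfolding Stab_def by auto
  show "Stab U \<noteq> {}"
  proof -
    have "\<one> \<in> Stab U" unfolding Stab_def using psi_one cspan_facts(4)[OF U] by auto
    thus ?thesis by auto
  qed
next
  fix g assume g: "g \<in> Stab U"
  hence gc: "g \<in> carrier G" unfolding Stab_def by auto
  show "inv g \<in> Stab U" unfolding Stab_def
  proof (intro CollectI conjI ballI)
    show "inv g \<in> carrier G" using gc by simp
    fix x assume x: "x \<in> cspan m U"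
    have xc: "x \<in> carrier_vec m" using cspan_facts(4)[OF U x] .
    have "\<psi> (inv g) *\<^sub>v x = \<psi> (inv g) *\<^sub>v (\<psi> g *\<^sub>v x)" using g x unfolding Stab_def by auto
    also have "\<dots> = \<psi> (inv g \<otimes> g) *\<^sub>v x"
      using psi_mult[of "inv g" g] gc assoc_mult_mat_vec[OF psi_car[of "inv g"] psi_car[of g] xc] by simp
    also have "\<dots> = x" using gc psi_one xc by simp
    finally show "\<psi> (inv g) *\<^sub>v x = x" .
  qed
next
  fix g h assume g: "g \<in> Stab U" and h: "h \<in> Stab U"
  hence gc: "g \<in> carrier G" and hc: "h \<in> carrier G" unfolding Stab_def by auto
  show "g \<otimes> h \<in> Stab U" unfolding Stab_def
  proof (intro CollectI conjI ballI)
    show "g \<otimes> h \<in> carrier G" using gc hc by simp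
    fix x assume x: "x \<in> cspan m U"
    have xc: "x \<in> carrier_vec m" using cspan_facts(4)[OF U x] .
    have "\<psi> (g \<otimes> h) *\<^sub>v x = \<psi> g *\<^sub>v (\<psi> h *\<^sub>v x)"
      using psi_mult[OF gc hc] assoc_mult_mat_vec[OF psi_car[OF gc] psi_car[OF hc] xc] by simp
    also have "\<dots> = x" using g h x unfolding Stab_def by auto
    finally show "\<psi> (g \<otimes> h) *\<^sub>v x = x" .
  qed
qed

end



lemma (in group) subgroup_nat_pow_closed':
  assumes "subgroup H G" "g \<in> H" shows "g [^] (k::nat) \<in> H"
  by (induct k) (simp_all add: subgroup.one_closed[OF assms(1)] subgroup.m_closed[OF assms(1)] assms(2))

context genrep
begin

lemma Stab_carrier: "Stab U \<subseteq> carrier G" unfolding Stab_def by auto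

lemma stab_step:
  assumes U: "U \<subseteq> carrier_vec m" and ind: "\<not> clin_dep m U" and finU: "finite U"
    and u0: "u0 \<in> carrier_vec m" "u0 \<notin> cspan m U"
  shows "\<exists>u (lam :: 'a \<Rightarrow> complex) g0. \<not> clin_dep m (insert u U) \<and> insert u U \<subseteq> carrier_vec m
     \<and> card (insert u U) = Suc (card U) \<and> card (insert u U) \<le> m \<and> g0 \<in> Stab U
     \<and> Stab (insert u U) = {g \<in> Stab U. lam g = 1}
     \<and> (\<forall>g\<in>Stab U. \<exists>j::nat. lam g = lam g0 ^ j)
     \<and> (\<forall>g\<in>Stab U. \<forall>h\<in>Stab U. lam (g \<otimes> h) = lam g * lam h) \<and> lam \<one> = 1"
proof -
  interpret V: vec_space "TYPE(complex)" m .
  have sg: "subgroup (Stab U) G" by (rule Stab_subgroup[OF U])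
  have finS: "finite (Stab U)" using finite_subset[OF Stab_carrier fin] .
  have fixS: "\<And>g x. g \<in> Stab U \<Longrightarrow> x \<in> cspan m U \<Longrightarrow> \<psi> g *\<^sub>v x = x" unfolding Stab_def by auto
  have gcar: "\<And>g. g \<in> Stab U \<Longrightarrow> g \<in> carrier G" using Stab_carrier by auto
  have "\<exists>u lam. u \<in> carrier_vec m \<and> u \<notin> cspan m U \<and> (\<forall>x\<in>Stab U. \<psi> x *\<^sub>v u - lam x \<cdot>\<^sub>v u \<in> cspan m U)"
  proof (rule common_eigen_mod[OF U finS _ _ _ order_pos _ u0])
    show "\<And>x. x \<in> Stab U \<Longrightarrow> \<psi> x \<in> carrier_mat m m" using psi_car gcar by blast
    show "\<And>x y. x \<in> Stab U \<Longrightarrow> y \<in> Stab U \<Longrightarrow> \<psi> x * \<psi> y = \<psi> y * \<psi> x" using psi_comm gcar by blast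
    show "\<And>x. x \<in> Stab U \<Longrightarrow> \<psi> x ^\<^sub>m order G = 1\<^sub>m m" using psi_order gcar by blast
    show "\<And>x v. x \<in> Stab U \<Longrightarrow> v \<in> cspan m U \<Longrightarrow> \<psi> x *\<^sub>v v \<in> cspan m U" using fixS by simp
  qed
  then obtain u lam where uc: "u \<in> carrier_vec m" and un: "u \<notin> cspan m U"
    and ul: "\<forall>x\<in>Stab U. \<psi> x *\<^sub>v u - lam x \<cdot>\<^sub>v u \<in> cspan m U" by blast
  define w where "w g = \<psi> g *\<^sub>v u - lam g \<cdot>\<^sub>v u" for g
  have wS: "\<And>g. g \<in> Stab U \<Longrightarrow> w g \<in> cspan m U" using ul w_def by auto
  have wc: "\<And>g. g \<in> Stab U \<Longrightarrow> w g \<in> carrier_vec m" using wS cspan_facts(4)[OF U] by auto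
  have psiu: "\<psi> g *\<^sub>v u = w g + lam g \<cdot>\<^sub>v u" if g: "g \<in> Stab U" for g
    unfolding w_def using psi_car[OF gcar[OF g]] uc by (intro eq_vecI) auto
  have lam1: "lam \<one> = 1"
  proof -
    have o: "\<one> \<in> Stab U" using subgroup.one_closed[OF sg] by simp
    have "w \<one> = (1 - lam \<one>) \<cdot>\<^sub>v u" unfolding w_def using psi_one uc
      by (intro eq_vecI) (auto simp: algebra_simps)
    hence "(1 - lam \<one>) \<cdot>\<^sub>v u \<in> cspan m U" using wS[OF o] by simp
    from cspan_smult_notin[OF U un this uc] show ?thesis by simp
  qed
  have lam_mult: "lam (g \<otimes> h) = lam g * lam h" if g: "g \<in> Stab U" and h: "h \<in> Stab U" for g h
  proof -
    have gh: "g \<otimes> h \<in> Stab U" using subgroup.m_closed[OF sg g h] .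
    have pg: "\<psi> g \<in> carrier_mat m m" using psi_car gcar g by auto
    have ph: "\<psi> h \<in> carrier_mat m m" using psi_car gcar h by auto
    have "\<psi> (g \<otimes> h) *\<^sub>v u = \<psi> g *\<^sub>v (\<psi> h *\<^sub>v u)"
      using psi_mult[OF gcar[OF g] gcar[OF h]] assoc_mult_mat_vec[OF pg ph uc] by simp
    also have "\<dots> = \<psi> g *\<^sub>v (w h + lam h \<cdot>\<^sub>v u)" using psiu[OF h] by simp
    also have "\<dots> = \<psi> g *\<^sub>v w h + lam h \<cdot>\<^sub>v (\<psi> g *\<^sub>v u)"
      using mult_add_distrib_mat_vec[OF pg wc[OF h], of "lam h \<cdot>\<^sub>v u"] mult_mat_vec[OF pg uc] uc by simp
    also have "\<dots> = w h + lam h \<cdot>\<^sub>v (w g + lam g \<cdot>\<^sub>v u)" using fixS[OF g wS[OF h]] psiu[OF g] by simp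
    finally have e: "\<psi> (g \<otimes> h) *\<^sub>v u = w h + lam h \<cdot>\<^sub>v (w g + lam g \<cdot>\<^sub>v u)" .
    have "(lam (g \<otimes> h) - lam g * lam h) \<cdot>\<^sub>v u = (w h + lam h \<cdot>\<^sub>v w g) - w (g \<otimes> h)"
      unfolding w_def[of "g \<otimes> h"] e using uc wc[OF g] wc[OF h]
      by (intro eq_vecI) (auto simp: algebra_simps)
    also have "\<dots> \<in> cspan m U"
      using cspan_minus[OF U cspan_facts(2)[OF U wS[OF h] cspan_facts(3)[OF U wS[OF g]]] wS[OF gh]] .
    finally have "lam (g \<otimes> h) - lam g * lam h = 0" using cspan_smult_notin[OF U un _ uc] by blast
    thus ?thesis by simp
  qed
  have lam_nz: "lam g \<noteq> 0" if g: "g \<in> Stab U" for g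
  proof -
    have "lam g * lam (inv g) = 1"
      using lam_mult[OF g subgroup.m_inv_closed[OF sg g]] lam1 gcar[OF g] by simp
    thus ?thesis by auto
  qed
  obtain a where a: "a \<in> lam ` Stab U" and acyc: "\<forall>b\<in>lam ` Stab U. \<exists>j::nat. b = a ^ j"
  proof -
    have "\<exists>a\<in>lam ` Stab U. \<forall>b\<in>lam ` Stab U. \<exists>j::nat. b = a ^ j"
    proof (rule finite_mult_cyclic)
      show "finite (lam ` Stab U)" using finS by simp
      show "lam ` Stab U \<noteq> {}" using subgroup.one_closed[OF sg] by auto
      show "0 \<notin> lam ` Stab U" using lam_nz by auto
      fix x y assume "x \<in> lam ` Stab U" "y \<in> lam ` Stab U"
      then obtain g h where "g \<in> Stab U" "h \<in> Stab U" "x = lam g" "y = lam h" by auto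
      hence "x * y = lam (g \<otimes> h)" "g \<otimes> h \<in> Stab U" using lam_mult subgroup.m_closed[OF sg] by auto
      thus "x * y \<in> lam ` Stab U" by auto
    qed
    thus ?thesis using that by blast
  qed
  obtain g0 where g0: "g0 \<in> Stab U" and ag0: "a = lam g0" using a by auto
  have uU: "u \<notin> U" using un cspan_facts(5)[OF U] by auto
  have U': "insert u U \<subseteq> carrier_vec m" using U uc by auto
  have ind': "\<not> clin_dep m (insert u U)"
    using V.lin_dep_iff_in_span[OF _ ind _ uU] U uc un by auto
  have card': "card (insert u U) = Suc (card U)" using finU uU by simp
  have le: "card (insert u U) \<le> m"
    using V.li_le_dim(2)[OF V.fin_dim _ ind'] U' V.dim_is_n by simp
  have stab': "Stab (insert u U) = {g \<in> Stab U. lam g = 1}"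
  proof
    show "Stab (insert u U) \<subseteq> {g \<in> Stab U. lam g = 1}"
    proof
      fix g assume g: "g \<in> Stab (insert u U)"
      have mono: "cspan m U \<subseteq> cspan m (insert u U)" using V.span_is_monotone[of U "insert u U"] by auto
      have gS: "g \<in> Stab U" using g mono unfolding Stab_def by auto
      have "u \<in> cspan m (insert u U)" using cspan_facts(5)[OF U'] by auto
      hence gu: "\<psi> g *\<^sub>v u = u" using g unfolding Stab_def by auto
      have "w g = (1 - lam g) \<cdot>\<^sub>v u" unfolding w_def gu using uc
        by (intro eq_vecI) (auto simp: algebra_simps)
      hence "(1 - lam g) \<cdot>\<^sub>v u \<in> cspan m U" using wS[OF gS] by simp
      from cspan_smult_notin[OF U un this uc] gS show "g \<in> {g \<in> Stab U. lam g = 1}" by simp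
    qed
  next
    show "{g \<in> Stab U. lam g = 1} \<subseteq> Stab (insert u U)"
    proof
      fix g assume "g \<in> {g \<in> Stab U. lam g = 1}"
      hence gS: "g \<in> Stab U" and l1: "lam g = 1" by auto
      have gc: "g \<in> carrier G" using gcar[OF gS] .
      have pw: "\<psi> (g [^] k) *\<^sub>v u = u + of_nat k \<cdot>\<^sub>v w g" for k :: nat
      proof (induct k)
        case 0 thus ?case using psi_one uc wc[OF gS] by (intro eq_vecI) auto
      next
        case (Suc k)
        have gk: "g [^] k \<in> Stab U" using subgroup_nat_pow_closed'[OF sg gS] .
        have pk: "\<psi> (g [^] k) \<in> carrier_mat m m" using psi_car gcar[OF gk] by auto
        have pg: "\<psi> g \<in> carrier_mat m m" using psi_car gc by auto
        have "\<psi> (g [^] Suc k) *\<^sub>v u = \<psi> (g [^] k) *\<^sub>v (\<psi> g *\<^sub>v u)"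
          using psi_mult[OF gcar[OF gk] gc] assoc_mult_mat_vec[OF pk pg uc] by simp
        also have "\<dots> = \<psi> (g [^] k) *\<^sub>v (w g + u)" using psiu[OF gS] l1 uc by simp
        also have "\<dots> = \<psi> (g [^] k) *\<^sub>v w g + \<psi> (g [^] k) *\<^sub>v u"
          using mult_add_distrib_mat_vec[OF pk wc[OF gS] uc] .
        also have "\<dots> = w g + (u + of_nat k \<cdot>\<^sub>v w g)" using fixS[OF gk wS[OF gS]] Suc by simp
        also have "\<dots> = u + of_nat (Suc k) \<cdot>\<^sub>v w g" using uc wc[OF gS]
          by (intro eq_vecI) (auto simp: algebra_simps)
        finally show ?case .
      qed
      have "u = u + of_nat (order G) \<cdot>\<^sub>v w g"
        using pw[of "order G"] pow_order_eq_1[OF gc] psi_one uc by simp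
      hence w0: "w g = 0\<^sub>v m"
      proof -
        assume e: "u = u + of_nat (order G) \<cdot>\<^sub>v w g"
        show ?thesis
        proof (rule eq_vecI)
          fix i assume i: "i < dim_vec (0\<^sub>v m :: complex vec)"
          hence i: "i < m" by simp
          have "u $ i = (u + of_nat (order G) \<cdot>\<^sub>v w g) $ i" using e by simp
          hence "of_nat (order G) * w g $ i = 0" using i uc wc[OF gS] by simp
          thus "w g $ i = 0\<^sub>v m $ i" using order_pos i by simp
        qed (use wc[OF gS] in simp)
      qed
      have gu: "\<psi> g *\<^sub>v u = u" using psiu[OF gS] w0 l1 uc by simp
      have "\<forall>x\<in>cspan m (insert u U). \<psi> g *\<^sub>v x = x"
      proof
        fix x assume x: "x \<in> cspan m (insert u U)"
        show "\<psi> g *\<^sub>v x = x"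
        proof (rule fix_span[OF U' psi_car[OF gc] _ x])
          fix y assume "y \<in> insert u U"
          thus "\<psi> g *\<^sub>v y = y" using gu fixS[OF gS] cspan_facts(5)[OF U] by auto
        qed
      qed
      thus "g \<in> Stab (insert u U)" using gc unfolding Stab_def by auto
    qed
  qed
  have cyc: "\<forall>g\<in>Stab U. \<exists>j::nat. lam g = lam g0 ^ j" using acyc ag0 by auto
  have lm: "\<forall>g\<in>Stab U. \<forall>h\<in>Stab U. lam (g \<otimes> h) = lam g * lam h" using lam_mult by blast
  show ?thesis
    apply (rule exI[where x=u], rule exI[where x=lam], rule exI[where x=g0])
    using ind' U' card' le g0 stab' cyc lm lam1 by (intro conjI)
qed

lemma stab_full:
  assumes U: "U \<subseteq> carrier_vec m" and full: "carrier_vec m \<subseteq> cspan m U"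
  shows "Stab U = {\<one>}"
proof
  show "{\<one>} \<subseteq> Stab U" using subgroup.one_closed[OF Stab_subgroup[OF U]] by simp
  show "Stab U \<subseteq> {\<one>}"
  proof
    fix g assume g: "g \<in> Stab U"
    hence gc: "g \<in> carrier G" and fx: "\<And>x. x \<in> cspan m U \<Longrightarrow> \<psi> g *\<^sub>v x = x" unfolding Stab_def by auto
    have pg: "\<psi> g \<in> carrier_mat m m" using psi_car[OF gc] .
    have "\<psi> g = 1\<^sub>m m"
    proof (rule eq_matI)
      fix i j assume i: "i < dim_row (1\<^sub>m m :: complex mat)" and j: "j < dim_col (1\<^sub>m m :: complex mat)"
      hence i: "i < m" and j: "j < m" by auto
      have "\<psi> g $$ (i,j) = (\<psi> g *\<^sub>v unit_vec m j) $ i" using pg i j by simp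
      also have "\<psi> g *\<^sub>v unit_vec m j = unit_vec m j" using fx full unit_vec_carrier by blast
      finally show "\<psi> g $$ (i,j) = 1\<^sub>m m $$ (i,j)" using i j by simp
    qed (use pg in auto)
    thus "g \<in> {\<one>}" using faithful[OF gc] by simp
  qed
qed

lemma lam_pow:
  assumes sg: "subgroup H G" and lm: "\<forall>g\<in>H. \<forall>h\<in>H. lam (g \<otimes> h) = lam g * (lam h :: complex)"
    and l1: "lam \<one> = 1" and g: "g \<in> H"
  shows "lam (g [^] (k::nat)) = lam g ^ k"
proof (induct k)
  case 0 thus ?case using l1 by simp
next
  case (Suc k)
  have "g [^] k \<in> H" using subgroup_nat_pow_closed'[OF sg g] .
  thus ?case using lm g Suc by simp
qed

lemma gen_ext:
  assumes U: "U \<subseteq> carrier_vec m" and S': "S' \<subseteq> carrier G"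
    and genS': "generate G S' = {g \<in> Stab U. lam g = 1}"
    and g0: "g0 \<in> Stab U"
    and cyc: "\<forall>g\<in>Stab U. \<exists>j::nat. lam g = lam g0 ^ j"
    and lm: "\<forall>g\<in>Stab U. \<forall>h\<in>Stab U. lam (g \<otimes> h) = lam g * (lam h :: complex)"
    and l1: "lam \<one> = 1"
  shows "generate G (insert g0 S') = Stab U"
proof
  have sg: "subgroup (Stab U) G" by (rule Stab_subgroup[OF U])
  have g0c: "g0 \<in> carrier G" using g0 Stab_carrier by auto
  have Sc: "insert g0 S' \<subseteq> carrier G" using S' g0c by auto
  have sub: "S' \<subseteq> Stab U" using generate.incl[of _ S' G] genS' by blast
  show "generate G (insert g0 S') \<subseteq> Stab U"
    by (rule generate_subgroup_incl[OF _ sg]) (use sub g0 in auto)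
  show "Stab U \<subseteq> generate G (insert g0 S')"
  proof
    fix g assume g: "g \<in> Stab U"
    have gc: "g \<in> carrier G" using g Stab_carrier by auto
    obtain j where j: "lam g = lam g0 ^ j" using cyc g by auto
    define x where "x = g0 [^] j"
    have xS: "x \<in> Stab U" unfolding x_def using subgroup_nat_pow_closed'[OF sg g0] .
    have xc: "x \<in> carrier G" using xS Stab_carrier by auto
    have lx: "lam x = lam g" unfolding x_def using lam_pow[OF sg lm l1 g0] j by simp
    define g' where "g' = g \<otimes> inv x"
    have g'S: "g' \<in> Stab U" unfolding g'_def using subgroup.m_closed[OF sg g subgroup.m_inv_closed[OF sg xS]] .
    have gg: "g' \<otimes> x = g" unfolding g'_def using gc xc by (simp add: m_assoc)
    have lnz: "lam g \<noteq> 0"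
    proof -
      have "lam g * lam (inv g) = 1" using lm g subgroup.m_inv_closed[OF sg g] l1 gc by (metis r_inv)
      thus ?thesis by auto
    qed
    have "lam g = lam g' * lam g" using lm g'S xS gg lx by metis
    hence "lam g' = 1" using lnz by simp
    hence "g' \<in> generate G S'" using genS' g'S by simp
    hence g'G: "g' \<in> generate G (insert g0 S')" using mono_generate[of S' "insert g0 S'"] by auto
    have gsg: "subgroup (generate G (insert g0 S')) G" using generate_is_subgroup[OF Sc] .
    have "g0 \<in> generate G (insert g0 S')" using generate.incl[of g0 "insert g0 S'" G] by simp
    hence xG: "x \<in> generate G (insert g0 S')" unfolding x_def using subgroup_nat_pow_closed'[OF gsg] by blast
    show "g \<in> generate G (insert g0 S')" using subgroup.m_closed[OF gsg g'G xG] gg by simp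
  qed
qed

lemma stab_rank:
  "U \<subseteq> carrier_vec m \<Longrightarrow> \<not> clin_dep m U \<Longrightarrow> finite U \<Longrightarrow> m - card U \<le> d \<Longrightarrow>
   \<exists>S. S \<subseteq> carrier G \<and> finite S \<and> card S \<le> d \<and> generate G S = Stab U"
proof (induct d arbitrary: U)
  case 0
  show ?case
  proof (cases "carrier_vec m \<subseteq> cspan m U")
    case True
    thus ?thesis using stab_full[OF 0(1) True] generate_empty by (intro exI[of _ "{}"]) auto
  next
    case False
    then obtain u0 where u0: "u0 \<in> carrier_vec m" "u0 \<notin> cspan m U" by auto
    from stab_step[OF 0(1,2,3) u0] obtain u where "card (insert u U) = Suc (card U)" "card (insert u U) \<le> m"
      by blast
    thus ?thesis using 0(4) by simp
  qed
next
  case (Suc d)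
  show ?case
  proof (cases "carrier_vec m \<subseteq> cspan m U")
    case True
    thus ?thesis using stab_full[OF Suc(2) True] generate_empty by (intro exI[of _ "{}"]) auto
  next
    case False
    then obtain u0 where u0: "u0 \<in> carrier_vec m" "u0 \<notin> cspan m U" by auto
    from stab_step[OF Suc(2,3,4) u0] obtain u and lam :: "'a \<Rightarrow> complex" and g0 where
      st: "\<not> clin_dep m (insert u U)" "insert u U \<subseteq> carrier_vec m"
      "card (insert u U) = Suc (card U)" "card (insert u U) \<le> m" "g0 \<in> Stab U"
      "Stab (insert u U) = {g \<in> Stab U. lam g = 1}"
      "\<forall>g\<in>Stab U. \<exists>j::nat. lam g = lam g0 ^ j"
      "\<forall>g\<in>Stab U. \<forall>h\<in>Stab U. lam (g \<otimes> h) = lam g * lam h" "lam \<one> = 1"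
      by blast
    have "m - card (insert u U) \<le> d" using st(3) Suc(5) by simp
    from Suc(1)[OF st(2,1) _ this] Suc(4) obtain S' where S': "S' \<subseteq> carrier G" "finite S'" "card S' \<le> d"
      "generate G S' = Stab (insert u U)" by auto
    have "generate G (insert g0 S') = Stab U"
      by (rule gen_ext[OF Suc(2) S'(1) _ st(5) st(7) st(8) st(9)]) (use S'(4) st(6) in simp)
    moreover have "card (insert g0 S') \<le> Suc d" using S'(2,3) card_insert_le[of S' g0]
      by (simp add: card_insert_if)
    moreover have "insert g0 S' \<subseteq> carrier G" using S'(1) st(5) Stab_carrier by auto
    ultimately show ?thesis using S'(2) by (intro exI[of _ "insert g0 S'"]) auto
  qed
qed

end



lemma cspan_empty: "cspan m {} = {0\<^sub>v m}"
proof -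
  interpret V: vec_space "TYPE(complex)" m .
  show ?thesis using V.span_empty by simp
qed

lemma single_indep:
  assumes u: "u \<in> carrier_vec m" and u0: "u \<noteq> 0\<^sub>v m"
  shows "\<not> clin_dep m {u}"
proof -
  interpret V: vec_space "TYPE(complex)" m .
  have e: "\<not> clin_dep m {}" unfolding V.lin_dep_def by auto
  have "u \<notin> cspan m {}" using cspan_empty u0 by simp
  thus ?thesis using V.lin_dep_iff_in_span[OF _ e u] by simp
qed

lemma cspan_empty_mem: "x \<in> cspan m {} \<Longrightarrow> x = 0\<^sub>v m"
  using cspan_empty[of m] by blast

context genrep
begin

lemma rank_fixed_vec:
  assumes u: "u \<in> carrier_vec m" and u0: "u \<noteq> 0\<^sub>v m"
    and fx: "\<And>g. g \<in> carrier G \<Longrightarrow> \<psi> g *\<^sub>v u = u"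
  shows "\<exists>S. S \<subseteq> carrier G \<and> finite S \<and> card S \<le> m - 1 \<and> generate G S = carrier G"
proof -
  have U: "{u} \<subseteq> carrier_vec m" using u by simp
  have "Stab {u} = carrier G"
  proof
    show "Stab {u} \<subseteq> carrier G" by (rule Stab_carrier)
    show "carrier G \<subseteq> Stab {u}"
    proof
      fix g assume g: "g \<in> carrier G"
      have "\<forall>x\<in>cspan m {u}. \<psi> g *\<^sub>v x = x"
        using fix_span[OF U psi_car[OF g]] fx[OF g] by blast
      thus "g \<in> Stab {u}" using g unfolding Stab_def by auto
    qed
  qed
  thus ?thesis using stab_rank[OF U single_indep[OF u u0], of "m - 1"] by simp
qed

end

lemma vec_smult_cancel:
  fixes u :: "complex vec"
  assumes u: "u \<in> carrier_vec m" and u0: "u \<noteq> 0\<^sub>v m" and e: "c \<cdot>\<^sub>v u = d \<cdot>\<^sub>v u"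
  shows "c = d"
proof -
  obtain i where i: "i < m" "u $ i \<noteq> 0"
  proof -
    have "\<exists>i<m. u $ i \<noteq> 0"
    proof (rule ccontr)
      assume "\<not> ?thesis"
      hence "u = 0\<^sub>v m" using u by (intro eq_vecI) auto
      thus False using u0 by simp
    qed
    thus ?thesis using that by blast
  qed
  have "(c \<cdot>\<^sub>v u) $ i = (d \<cdot>\<^sub>v u) $ i" using e by simp
  thus ?thesis using i u by simp
qed

lemma smult_pow_mat:
  assumes A: "A \<in> carrier_mat n n"
  shows "(c \<cdot>\<^sub>m A) ^\<^sub>m k = (c ^ k :: 'a :: comm_ring_1) \<cdot>\<^sub>m (A ^\<^sub>m k)"
proof (induct k)
  case 0 thus ?case using A by (intro eq_matI) auto
next
  case (Suc k)
  have "(c \<cdot>\<^sub>m A) ^\<^sub>m Suc k = (c ^ k \<cdot>\<^sub>m (A ^\<^sub>m k)) * (c \<cdot>\<^sub>m A)" using Suc by simp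
  also have "\<dots> = c ^ Suc k \<cdot>\<^sub>m (A ^\<^sub>m Suc k)"
    using mult_smult_assoc_mat[OF pow_carrier_mat[OF A] smult_carrier_mat[OF A]]
      mult_smult_distrib[OF pow_carrier_mat[OF A] A] by (simp add: smult_smult_mat mult.commute)
  finally show ?case .
qed


lemma nth_root_exists:
  fixes s :: complex
  assumes "s \<noteq> 0" "N > 0"
  shows "\<exists>t. t ^ N = s"
proof -
  have "card {z::complex. z ^ N = s} = N" using card_nth_roots[OF assms] .
  hence "{z::complex. z ^ N = s} \<noteq> {}" using assms(2) by (metis card.empty less_irrefl)
  thus ?thesis by blast
qed

lemma proj_to_genuine:
  fixes G :: "('a, 'b) monoid_scheme" and \<alpha> :: "'a \<Rightarrow> 'a \<Rightarrow> complex"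
  assumes cg: "comm_group G" and fin: "finite (carrier G)" and coc: "cocycle2 G \<alpha>"
    and rep: "alpha_rep G \<alpha> m \<rho>" and m: "0 < m"
    and commute: "\<And>g h. g \<in> carrier G \<Longrightarrow> h \<in> carrier G \<Longrightarrow> \<rho> g * \<rho> h = \<rho> h * \<rho> g"
    and faith: "\<And>g. g \<in> carrier G \<Longrightarrow> (\<exists>c. \<rho> g = c \<cdot>\<^sub>m 1\<^sub>m m) \<Longrightarrow> g = \<one>\<^bsub>G\<^esub>"
  shows "\<exists>S. S \<subseteq> carrier G \<and> finite S \<and> card S \<le> m - 1 \<and> generate G S = carrier G"
proof -
  interpret G: comm_group G by fact
  have car: "\<And>x. x \<in> carrier G \<Longrightarrow> \<rho> x \<in> carrier_mat m m" using rep unfolding alpha_rep_def by auto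
  have mul: "\<And>x y. x \<in> carrier G \<Longrightarrow> y \<in> carrier G \<Longrightarrow> \<rho> x * \<rho> y = \<alpha> x y \<cdot>\<^sub>m \<rho> (x \<otimes>\<^bsub>G\<^esub> y)"
    using rep unfolding alpha_rep_def by auto
  have r1: "\<rho> \<one>\<^bsub>G\<^esub> = 1\<^sub>m m" using rep unfolding alpha_rep_def by auto
  have anz: "\<And>x y. x \<in> carrier G \<Longrightarrow> y \<in> carrier G \<Longrightarrow> \<alpha> x y \<noteq> 0"
    using coc unfolding cocycle2_def by auto
  define N where "N = order G"
  have N: "N > 0" using fin G.one_closed unfolding N_def Coset.order_def by (auto simp: card_gt_0_iff)
  have pw: "\<exists>s. s \<noteq> 0 \<and> \<rho> h ^\<^sub>m k = s \<cdot>\<^sub>m \<rho> (h [^]\<^bsub>G\<^esub> k)" if h: "h \<in> carrier G" for h and k :: nat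
  proof (induct k)
    case 0 thus ?case using r1 car[OF h] by (intro exI[of _ 1]) (auto simp: one_smult_mat')
  next
    case (Suc k)
    then obtain s where s: "s \<noteq> 0" "\<rho> h ^\<^sub>m k = s \<cdot>\<^sub>m \<rho> (h [^]\<^bsub>G\<^esub> k)" by auto
    have hk: "h [^]\<^bsub>G\<^esub> k \<in> carrier G" using h by simp
    have "\<rho> h ^\<^sub>m Suc k = (s \<cdot>\<^sub>m \<rho> (h [^]\<^bsub>G\<^esub> k)) * \<rho> h" using s by simp
    also have "\<dots> = s \<cdot>\<^sub>m (\<rho> (h [^]\<^bsub>G\<^esub> k) * \<rho> h)" using mult_smult_assoc_mat[OF car[OF hk] car[OF h]] .
    also have "\<dots> = (s * \<alpha> (h [^]\<^bsub>G\<^esub> k) h) \<cdot>\<^sub>m \<rho> (h [^]\<^bsub>G\<^esub> Suc k)"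
      using mul[OF hk h] by (simp add: smult_smult_mat)
    finally show ?case using s anz[OF hk h] by (intro exI[of _ "s * \<alpha> (h [^]\<^bsub>G\<^esub> k) h"]) auto
  qed
  have "\<forall>h\<in>carrier G. \<exists>t. t \<noteq> 0 \<and> \<rho> h ^\<^sub>m N = (t ^ N) \<cdot>\<^sub>m 1\<^sub>m m"
  proof
    fix h assume h: "h \<in> carrier G"
    obtain s where s: "s \<noteq> 0" "\<rho> h ^\<^sub>m N = s \<cdot>\<^sub>m \<rho> (h [^]\<^bsub>G\<^esub> N)" using pw[OF h] by auto
    obtain t where t: "t ^ N = s" using nth_root_exists[OF s(1) N] by auto
    have "t \<noteq> 0" using t s(1) N by (cases "t = 0") (auto simp: zero_power)
    moreover have "\<rho> h ^\<^sub>m N = (t ^ N) \<cdot>\<^sub>m 1\<^sub>m m" using s(2) t r1 G.pow_order_eq_1[OF h] N_def by simp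
    ultimately show "\<exists>t. t \<noteq> 0 \<and> \<rho> h ^\<^sub>m N = (t ^ N) \<cdot>\<^sub>m 1\<^sub>m m" by blast
  qed
  then obtain t where t: "\<And>h. h \<in> carrier G \<Longrightarrow> t h \<noteq> 0 \<and> \<rho> h ^\<^sub>m N = (t h ^ N) \<cdot>\<^sub>m 1\<^sub>m m"
    by metis
  define M where "M h = inverse (t h) \<cdot>\<^sub>m \<rho> h" for h
  have Mc: "\<And>h. h \<in> carrier G \<Longrightarrow> M h \<in> carrier_mat m m" unfolding M_def using car by simp
  have Mpow: "M h ^\<^sub>m N = 1\<^sub>m m" if h: "h \<in> carrier G" for h
  proof -
    have "M h ^\<^sub>m N = inverse (t h) ^ N \<cdot>\<^sub>m (\<rho> h ^\<^sub>m N)" unfolding M_def using smult_pow_mat[OF car[OF h]] .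
    also have "\<dots> = (inverse (t h) ^ N * t h ^ N) \<cdot>\<^sub>m 1\<^sub>m m" using t[OF h] by (simp add: smult_smult_mat)
    also have "inverse (t h) ^ N * t h ^ N = 1" using t[OF h] by (simp add: power_inverse)
    finally show ?thesis by (simp add: one_smult_mat')
  qed
  have Mcomm: "M x * M y = M y * M x" if x: "x \<in> carrier G" and y: "y \<in> carrier G" for x y
  proof -
    have "M x * M y = (inverse (t x) * inverse (t y)) \<cdot>\<^sub>m (\<rho> x * \<rho> y)" unfolding M_def
      using mult_smult_assoc_mat[OF car[OF x] smult_carrier_mat[OF car[OF y]]] mult_smult_distrib[OF car[OF x] car[OF y]]
      by (simp add: smult_smult_mat)
    also have "\<dots> = (inverse (t y) * inverse (t x)) \<cdot>\<^sub>m (\<rho> y * \<rho> x)" using commute[OF x y] by (simp add: mult.commute)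
    also have "\<dots> = M y * M x" unfolding M_def
      using mult_smult_assoc_mat[OF car[OF y] smult_carrier_mat[OF car[OF x]]] mult_smult_distrib[OF car[OF y] car[OF x]]
      by (simp add: smult_smult_mat)
    finally show ?thesis .
  qed
  have u0c: "unit_vec m 0 \<in> carrier_vec m" by simp
  have u0n: "unit_vec m 0 \<notin> cspan m {}"
  proof
    assume "unit_vec m 0 \<in> cspan m {}"
    hence "(unit_vec m 0 :: complex vec) = 0\<^sub>v m" by (rule cspan_empty_mem)
    hence "(unit_vec m 0 :: complex vec) $ 0 = 0\<^sub>v m $ 0" by (rule arg_cong)
    thus False using m by simp
  qed
  have "\<exists>u lam. u \<in> carrier_vec m \<and> u \<notin> cspan m {} \<and> (\<forall>x\<in>carrier G. M x *\<^sub>v u - lam x \<cdot>\<^sub>v u \<in> cspan m {})"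
  proof (rule common_eigen_mod[OF _ fin Mc Mcomm Mpow N _ u0c u0n])
    show "{} \<subseteq> carrier_vec m" by simp
    fix x v assume x: "x \<in> carrier G" and v: "v \<in> cspan m {}"
    have "M x *\<^sub>v 0\<^sub>v m = 0\<^sub>v m" using Mc[OF x] by (intro eq_vecI) auto
    thus "M x *\<^sub>v v \<in> cspan m {}" using v cspan_empty by simp
  qed auto
  then obtain u lam where uc: "u \<in> carrier_vec m" and un: "u \<notin> cspan m {}"
    and ul: "\<forall>x\<in>carrier G. M x *\<^sub>v u - lam x \<cdot>\<^sub>v u \<in> cspan m {}" by blast
  have u0: "u \<noteq> 0\<^sub>v m" using un cspan_empty by simp
  define mu where "mu x = t x * lam x" for x
  have eig: "\<rho> x *\<^sub>v u = mu x \<cdot>\<^sub>v u" if x: "x \<in> carrier G" for x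
  proof -
    have d: "M x *\<^sub>v u - lam x \<cdot>\<^sub>v u = 0\<^sub>v m" using ul x cspan_empty by simp
    have "M x *\<^sub>v u = lam x \<cdot>\<^sub>v u"
    proof (rule eq_vecI)
      fix i assume "i < dim_vec (lam x \<cdot>\<^sub>v u)"
      hence i: "i < m" using uc by simp
      have "(M x *\<^sub>v u - lam x \<cdot>\<^sub>v u) $ i = 0" using d i by simp
      thus "(M x *\<^sub>v u) $ i = (lam x \<cdot>\<^sub>v u) $ i" using i uc Mc[OF x] by simp
    qed (use uc Mc[OF x] in simp)
    have "\<rho> x = t x \<cdot>\<^sub>m M x" unfolding M_def using t[OF x] by (simp add: smult_smult_mat one_smult_mat')
    hence "\<rho> x *\<^sub>v u = t x \<cdot>\<^sub>v (M x *\<^sub>v u)" using smult_mat_vec[OF Mc[OF x] uc] by simp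
    also have "\<dots> = mu x \<cdot>\<^sub>v u" using \<open>M x *\<^sub>v u = lam x \<cdot>\<^sub>v u\<close> by (simp add: mu_def smult_smult_assoc)
    finally show ?thesis .
  qed
  have mu_mult: "mu g * mu h = \<alpha> g h * mu (g \<otimes>\<^bsub>G\<^esub> h)" if g: "g \<in> carrier G" and h: "h \<in> carrier G" for g h
  proof (rule vec_smult_cancel[OF uc u0])
    have gh: "g \<otimes>\<^bsub>G\<^esub> h \<in> carrier G" using g h by simp
    have "(\<rho> g * \<rho> h) *\<^sub>v u = \<rho> g *\<^sub>v (\<rho> h *\<^sub>v u)" using assoc_mult_mat_vec[OF car[OF g] car[OF h] uc] .
    also have "\<dots> = (mu g * mu h) \<cdot>\<^sub>v u" using eig[OF h] eig[OF g] mult_mat_vec[OF car[OF g] uc]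
      by (simp add: smult_smult_assoc mult.commute)
    finally have e1: "(\<rho> g * \<rho> h) *\<^sub>v u = (mu g * mu h) \<cdot>\<^sub>v u" .
    have "(\<rho> g * \<rho> h) *\<^sub>v u = (\<alpha> g h * mu (g \<otimes>\<^bsub>G\<^esub> h)) \<cdot>\<^sub>v u"
      using mul[OF g h] smult_mat_vec[OF car[OF gh] uc] eig[OF gh] by (simp add: smult_smult_assoc)
    with e1 show "(mu g * mu h) \<cdot>\<^sub>v u = (\<alpha> g h * mu (g \<otimes>\<^bsub>G\<^esub> h)) \<cdot>\<^sub>v u" by simp
  qed
  have mu1: "mu \<one>\<^bsub>G\<^esub> = 1"
  proof (rule vec_smult_cancel[OF uc u0])
    show "mu \<one>\<^bsub>G\<^esub> \<cdot>\<^sub>v u = 1 \<cdot>\<^sub>v u" using eig[of "\<one>\<^bsub>G\<^esub>"] r1 uc by simp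
  qed
  have munz: "mu g \<noteq> 0" if g: "g \<in> carrier G" for g
  proof -
    have "mu g * mu (inv\<^bsub>G\<^esub> g) = \<alpha> g (inv\<^bsub>G\<^esub> g)" using mu_mult[of g "inv\<^bsub>G\<^esub> g"] g mu1 by simp
    thus ?thesis using anz[of g "inv\<^bsub>G\<^esub> g"] g by auto
  qed
  define \<psi> where "\<psi> g = inverse (mu g) \<cdot>\<^sub>m \<rho> g" for g
  have gr: "genrep G m \<psi>"
  proof (intro genrep.intro genrep_axioms.intro)
    show "comm_group G" by fact
    show "finite (carrier G)" by fact
    show "\<And>g. g \<in> carrier G \<Longrightarrow> \<psi> g \<in> carrier_mat m m" unfolding \<psi>_def using car by simp
    show "\<psi> \<one>\<^bsub>G\<^esub> = 1\<^sub>m m" unfolding \<psi>_def using mu1 r1 by (simp add: one_smult_mat')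
    show "\<psi> (g \<otimes>\<^bsub>G\<^esub> h) = \<psi> g * \<psi> h" if g: "g \<in> carrier G" and h: "h \<in> carrier G" for g h
    proof -
      have "\<psi> g * \<psi> h = (inverse (mu g) * inverse (mu h)) \<cdot>\<^sub>m (\<rho> g * \<rho> h)" unfolding \<psi>_def
        using mult_smult_assoc_mat[OF car[OF g] smult_carrier_mat[OF car[OF h]]] mult_smult_distrib[OF car[OF g] car[OF h]]
        by (simp add: smult_smult_mat)
      also have "\<dots> = (inverse (mu g) * inverse (mu h) * \<alpha> g h) \<cdot>\<^sub>m \<rho> (g \<otimes>\<^bsub>G\<^esub> h)"
        using mul[OF g h] by (simp add: smult_smult_mat)
      also have "inverse (mu g) * inverse (mu h) * \<alpha> g h = inverse (mu (g \<otimes>\<^bsub>G\<^esub> h))"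
        using mu_mult[OF g h] munz[OF g] munz[OF h] anz[OF g h] by (simp add: field_simps)
      finally show ?thesis unfolding \<psi>_def by simp
    qed
    show "g = \<one>\<^bsub>G\<^esub>" if g: "g \<in> carrier G" and p1: "\<psi> g = 1\<^sub>m m" for g
    proof (rule faith[OF g])
      have "\<rho> g = mu g \<cdot>\<^sub>m \<psi> g" unfolding \<psi>_def using munz[OF g] by (simp add: smult_smult_mat one_smult_mat')
      thus "\<exists>c. \<rho> g = c \<cdot>\<^sub>m 1\<^sub>m m" using p1 by auto
    qed
  qed
  have fx: "\<psi> g *\<^sub>v u = u" if g: "g \<in> carrier G" for g
    unfolding \<psi>_def using smult_mat_vec[OF car[OF g] uc] eig[OF g] munz[OF g] by (simp add: smult_smult_assoc)
  show ?thesis using genrep.rank_fixed_vec[OF gr uc u0 fx] by simp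
qed



definition is_char :: "('a, 'b) monoid_scheme \<Rightarrow> 'a set \<Rightarrow> ('a \<Rightarrow> complex) \<Rightarrow> bool" where
  "is_char G H \<chi> \<longleftrightarrow> (\<forall>x\<in>H. \<chi> x \<noteq> 0) \<and> (\<forall>x\<in>H. \<forall>y\<in>H. \<chi> (x \<otimes>\<^bsub>G\<^esub> y) = \<chi> x * \<chi> y)"

context comm_group
begin

lemma char_one:
  assumes H: "subgroup H G" and ch: "is_char G H \<chi>"
  shows "\<chi> \<one> = 1"
proof -
  have o: "\<one> \<in> H" using subgroup.one_closed[OF H] .
  have "\<chi> \<one> = \<chi> \<one> * \<chi> \<one>" using ch o unfolding is_char_def by (metis l_one one_closed)
  thus ?thesis using ch o unfolding is_char_def by auto
qed

lemma decomp_uniq_aux: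
  assumes H: "subgroup H G" and s: "s \<in> carrier G"
    and dmin: "\<And>j::nat. 0 < j \<Longrightarrow> j < d \<Longrightarrow> s [^] j \<notin> H"
    and h1: "h1 \<in> H" and h2: "h2 \<in> H" and le: "j1 \<le> j2" and j2: "j2 < d"
    and eq: "h1 \<otimes> s [^] (j1::nat) = h2 \<otimes> s [^] (j2::nat)"
  shows "j1 = j2 \<and> h1 = h2"
proof -
  have Hc: "H \<subseteq> carrier G" using subgroup.subset[OF H] .
  have h1c: "h1 \<in> carrier G" and h2c: "h2 \<in> carrier G" using h1 h2 Hc by auto
  define e where "e = j2 - j1"
  have "s [^] j2 = s [^] e \<otimes> s [^] j1" using s le by (simp add: nat_pow_mult e_def)
  hence "h1 \<otimes> s [^] j1 = (h2 \<otimes> s [^] e) \<otimes> s [^] j1" using eq s h2c by (simp add: m_assoc)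
  hence h1e: "h1 = h2 \<otimes> s [^] e" using s h1c h2c by simp
  hence "s [^] e = inv h2 \<otimes> h1" using inv_solve_left[of "s [^] e" h2 h1] s h1c h2c by simp
  moreover have "inv h2 \<otimes> h1 \<in> H" using subgroup.m_closed[OF H subgroup.m_inv_closed[OF H h2] h1] .
  ultimately have "s [^] e \<in> H" by simp
  hence "e = 0" using dmin[of e] j2 le unfolding e_def by linarith
  thus ?thesis using h1e le h2c unfolding e_def by simp
qed

lemma decomp_uniq:
  assumes H: "subgroup H G" and s: "s \<in> carrier G"
    and dmin: "\<And>j::nat. 0 < j \<Longrightarrow> j < d \<Longrightarrow> s [^] j \<notin> H"
    and h1: "h1 \<in> H" and h2: "h2 \<in> H" and j1: "j1 < d" and j2: "j2 < d"
    and eq: "h1 \<otimes> s [^] (j1::nat) = h2 \<otimes> s [^] (j2::nat)"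
  shows "j1 = j2 \<and> h1 = h2"
proof (cases "j1 \<le> j2")
  case True thus ?thesis using decomp_uniq_aux[OF H s dmin h1 h2 True j2 eq] by simp
next
  case False thus ?thesis using decomp_uniq_aux[OF H s dmin h2 h1 _ j1 eq[symmetric]] by simp
qed

lemma prod_decomp:
  assumes h1: "h1 \<in> carrier G" and h2: "h2 \<in> carrier G" and s: "s \<in> carrier G"
  shows "(h1 \<otimes> s [^] (j1::nat)) \<otimes> (h2 \<otimes> s [^] (j2::nat)) = (h1 \<otimes> h2) \<otimes> s [^] (j1 + j2)"
proof -
  have "(h1 \<otimes> s [^] j1) \<otimes> (h2 \<otimes> s [^] j2) = h1 \<otimes> (s [^] j1 \<otimes> (h2 \<otimes> s [^] j2))"
    using h1 h2 s by (simp add: m_assoc)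
  also have "s [^] j1 \<otimes> (h2 \<otimes> s [^] j2) = h2 \<otimes> (s [^] j1 \<otimes> s [^] j2)"
    using h2 s by (simp add: m_lcomm)
  also have "s [^] j1 \<otimes> s [^] j2 = s [^] (j1 + j2)" using s by (simp add: nat_pow_mult)
  finally show ?thesis using h1 h2 s by (simp add: m_assoc)
qed

lemma char_step:
  fixes d :: nat and c :: complex
  assumes H: "subgroup H G" and ch: "is_char G H \<chi>" and s: "s \<in> carrier G"
    and d: "0 < d" and sd: "s [^] d \<in> H" and dmin: "\<And>j::nat. 0 < j \<Longrightarrow> j < d \<Longrightarrow> s [^] j \<notin> H"
    and c: "c ^ d = \<chi> (s [^] d)"
  defines "H' \<equiv> {h \<otimes> s [^] j | h j. h \<in> H \<and> j < d}"
  shows "subgroup H' G \<and> H \<subseteq> H' \<and> s \<in> H'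
    \<and> (\<exists>\<chi>'. is_char G H' \<chi>' \<and> (\<forall>h\<in>H. \<forall>j<d. \<chi>' (h \<otimes> s [^] j) = \<chi> h * c ^ j))"
proof -
  have Hc: "H \<subseteq> carrier G" using subgroup.subset[OF H] .
  have chnz: "\<And>x. x \<in> H \<Longrightarrow> \<chi> x \<noteq> 0" and chm: "\<And>x y. x \<in> H \<Longrightarrow> y \<in> H \<Longrightarrow> \<chi> (x \<otimes> y) = \<chi> x * \<chi> y"
    using ch unfolding is_char_def by auto
  have cnz: "c \<noteq> 0" using c chnz[OF sd] d by (cases "c = 0") (auto simp: zero_power)
  have sdc: "s [^] d \<in> carrier G" using s by simp
  have prodH': "\<exists>h\<in>H. \<exists>j<d. (h1 \<otimes> s [^] j1) \<otimes> (h2 \<otimes> s [^] j2) = h \<otimes> s [^] j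
      \<and> \<chi> h * c ^ j = (\<chi> h1 * c ^ j1) * (\<chi> h2 * c ^ j2)"
    if h1: "h1 \<in> H" and h2: "h2 \<in> H" and j1: "j1 < d" and j2: "j2 < d" for h1 h2 j1 j2
  proof -
    have h1c: "h1 \<in> carrier G" and h2c: "h2 \<in> carrier G" using h1 h2 Hc by auto
    have pd: "(h1 \<otimes> s [^] j1) \<otimes> (h2 \<otimes> s [^] j2) = (h1 \<otimes> h2) \<otimes> s [^] (j1 + j2)"
      by (rule prod_decomp[OF h1c h2c s])
    have hh: "h1 \<otimes> h2 \<in> H" using subgroup.m_closed[OF H h1 h2] .
    show ?thesis
    proof (cases "j1 + j2 < d")
      case True
      thus ?thesis using pd hh chm[OF h1 h2] by (intro bexI[of _ "h1 \<otimes> h2"] exI[of _ "j1 + j2"]) (auto simp: power_add)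
    next
      case False
      define r where "r = j1 + j2 - d"
      have r: "r < d" and jr: "j1 + j2 = d + r" using False j1 j2 unfolding r_def by auto
      have "s [^] (j1 + j2) = s [^] d \<otimes> s [^] r" using s jr by (simp add: nat_pow_mult)
      hence pd2: "(h1 \<otimes> s [^] j1) \<otimes> (h2 \<otimes> s [^] j2) = (h1 \<otimes> h2 \<otimes> s [^] d) \<otimes> s [^] r"
        using pd h1c h2c s by (simp add: m_assoc)
      have hh2: "h1 \<otimes> h2 \<otimes> s [^] d \<in> H" using subgroup.m_closed[OF H hh sd] .
      have cc: "c ^ j1 * c ^ j2 = c ^ d * c ^ r" by (simp add: power_add[symmetric] jr)
      have "\<chi> (h1 \<otimes> h2 \<otimes> s [^] d) * c ^ r = (\<chi> h1 * c ^ j1) * (\<chi> h2 * c ^ j2)"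
        using chm[OF hh sd] chm[OF h1 h2] c cc by (simp add: mult_ac)
      thus ?thesis using pd2 hh2 r by blast
    qed
  qed
  have H'c: "H' \<subseteq> carrier G" unfolding H'_def using Hc s by auto
  have one': "\<one> \<in> H'" unfolding H'_def using subgroup.one_closed[OF H] d by (intro CollectI exI[of _ "\<one>"] exI[of _ 0]) auto
  have sub': "subgroup H' G"
  proof (rule subgroupI[OF H'c])
    show "H' \<noteq> {}" using one' by auto
  next
    fix x assume "x \<in> H'"
    then obtain h j where h: "h \<in> H" and j: "j < d" and x: "x = h \<otimes> s [^] j" unfolding H'_def by auto
    have hc: "h \<in> carrier G" using h Hc by auto
    show "inv x \<in> H'"
    proof (cases "j = 0")
      case True
      hence "inv x = inv h \<otimes> s [^] (0::nat)" using x hc by simp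
      thus ?thesis unfolding H'_def using subgroup.m_inv_closed[OF H h] d by blast
    next
      case False
      define y where "y = (inv h \<otimes> inv (s [^] d)) \<otimes> s [^] (d - j)"
      have yc: "y \<in> carrier G" unfolding y_def using hc s by simp
      have xc: "x \<in> carrier G" using x hc s by simp
      have "y \<otimes> x = (inv h \<otimes> inv (s [^] d) \<otimes> h) \<otimes> s [^] (d - j + j)"
        unfolding y_def x using prod_decomp[of "inv h \<otimes> inv (s [^] d)" h s "d - j" j] hc s by simp
      also have "d - j + j = d" using j by simp
      also have "inv h \<otimes> inv (s [^] d) \<otimes> h = inv (s [^] d)"
      proof -
        have "inv h \<otimes> inv (s [^] d) \<otimes> h = inv h \<otimes> (inv (s [^] d) \<otimes> h)" using hc s by (simp add: m_assoc)
        also have "inv (s [^] d) \<otimes> h = h \<otimes> inv (s [^] d)" using hc s by (simp add: m_comm)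
        also have "inv h \<otimes> (h \<otimes> inv (s [^] d)) = (inv h \<otimes> h) \<otimes> inv (s [^] d)"
          using hc s by (intro m_assoc[symmetric]) auto
        finally show ?thesis using hc s by simp
      qed
      finally have "y \<otimes> x = \<one>" using s by simp
      hence "inv x = y" using inv_equality[OF _ xc yc] by simp
      moreover have "inv h \<otimes> inv (s [^] d) \<in> H"
        using subgroup.m_closed[OF H subgroup.m_inv_closed[OF H h] subgroup.m_inv_closed[OF H sd]] .
      moreover have "d - j < d" using False j by simp
      ultimately show ?thesis unfolding H'_def y_def by blast
    qed
  next
    fix x y assume "x \<in> H'" "y \<in> H'"
    then obtain h1 j1 h2 j2 where "h1 \<in> H" "j1 < d" "x = h1 \<otimes> s [^] j1" "h2 \<in> H" "j2 < d" "y = h2 \<otimes> s [^] j2"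
      unfolding H'_def by auto
    thus "x \<otimes> y \<in> H'" using prodH' unfolding H'_def by blast
  qed
  have HH': "H \<subseteq> H'"
  proof
    fix h assume h: "h \<in> H"
    hence "h = h \<otimes> s [^] (0::nat)" using Hc by auto
    thus "h \<in> H'" unfolding H'_def using h d by blast
  qed
  have sH': "s \<in> H'"
  proof (cases "d = 1")
    case True thus ?thesis using sd HH' s by auto
  next
    case False
    hence "s = \<one> \<otimes> s [^] (1::nat)" using s by simp
    thus ?thesis unfolding H'_def using subgroup.one_closed[OF H] False d by (intro CollectI exI[of _ "\<one>"] exI[of _ 1]) auto
  qed
  define \<chi>' where "\<chi>' x = (SOME v. \<exists>h\<in>H. \<exists>j<d. x = h \<otimes> s [^] j \<and> v = \<chi> h * c ^ j)" for x
  have val: "\<chi>' (h \<otimes> s [^] j) = \<chi> h * c ^ j" if h: "h \<in> H" and j: "j < d" for h j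
  proof -
    have ex: "\<exists>v. \<exists>h'\<in>H. \<exists>j'<d. h \<otimes> s [^] j = h' \<otimes> s [^] j' \<and> v = \<chi> h' * c ^ j'" using h j by blast
    from someI_ex[OF ex] obtain h' j' where h': "h' \<in> H" "j' < d" "h \<otimes> s [^] j = h' \<otimes> s [^] j'"
      and v: "\<chi>' (h \<otimes> s [^] j) = \<chi> h' * c ^ j'" unfolding \<chi>'_def by blast
    have "j = j' \<and> h = h'" using decomp_uniq[OF H s dmin h h'(1) j h'(2) h'(3)] .
    thus ?thesis using v by simp
  qed
  have "is_char G H' \<chi>'"
    unfolding is_char_def
  proof (intro conjI ballI)
    fix x assume "x \<in> H'"
    then obtain h j where h: "h \<in> H" and j: "j < d" and x: "x = h \<otimes> s [^] j" unfolding H'_def by auto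
    show "\<chi>' x \<noteq> 0" using val[OF h j] x chnz[OF h] cnz by simp
  next
    fix x y assume "x \<in> H'" "y \<in> H'"
    then obtain h1 j1 h2 j2 where a: "h1 \<in> H" "j1 < d" "x = h1 \<otimes> s [^] j1" "h2 \<in> H" "j2 < d" "y = h2 \<otimes> s [^] j2"
      unfolding H'_def by auto
    obtain h j where hj: "h \<in> H" "j < d" "(h1 \<otimes> s [^] j1) \<otimes> (h2 \<otimes> s [^] j2) = h \<otimes> s [^] j"
      "\<chi> h * c ^ j = (\<chi> h1 * c ^ j1) * (\<chi> h2 * c ^ j2)"
      using prodH'[OF a(1) a(4) a(2) a(5)] by blast
    show "\<chi>' (x \<otimes> y) = \<chi>' x * \<chi>' y"
      using a hj val by simp
  qed
  thus ?thesis using sub' HH' sH' val by blast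
qed

lemma least_pow:
  assumes fin: "finite (carrier G)" and H: "subgroup H G" and s: "s \<in> carrier G"
  shows "\<exists>d::nat. 0 < d \<and> s [^] d \<in> H \<and> (\<forall>j::nat. 0 < j \<longrightarrow> j < d \<longrightarrow> s [^] j \<notin> H)"
proof -
  define P where "P d \<longleftrightarrow> 0 < d \<and> s [^] d \<in> H" for d :: nat
  have op: "order G > 0" using fin one_closed unfolding Coset.order_def by (auto simp: card_gt_0_iff)
  have Pord: "P (order G)" unfolding P_def using op pow_order_eq_1[OF s] subgroup.one_closed[OF H] by simp
  define d where "d = (LEAST d. P d)"
  have Pd: "P d" unfolding d_def by (rule LeastI[of P, OF Pord])
  have "\<forall>j::nat. 0 < j \<longrightarrow> j < d \<longrightarrow> s [^] j \<notin> H"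
    using not_less_Least[of _ P] unfolding d_def P_def by blast
  thus ?thesis using Pd unfolding P_def by blast
qed

lemma char_extend:
  assumes fin: "finite (carrier G)"
  shows "subgroup H G \<Longrightarrow> is_char G H \<chi> \<Longrightarrow> \<exists>\<chi>'. is_char G (carrier G) \<chi>' \<and> (\<forall>h\<in>H. \<chi>' h = \<chi> h)"
proof (induct "card (carrier G - H)" arbitrary: H \<chi> rule: less_induct)
  case less
  note H = less.prems(1) and ch = less.prems(2)
  show ?case
  proof (cases "H = carrier G")
    case True thus ?thesis using ch by auto
  next
    case False
    then obtain s where s: "s \<in> carrier G" "s \<notin> H" using subgroup.subset[OF H] by auto
    obtain d :: nat where d: "0 < d" "s [^] d \<in> H" and dmin: "\<And>j::nat. 0 < j \<Longrightarrow> j < d \<Longrightarrow> s [^] j \<notin> H"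
      using least_pow[OF fin H s(1)] by blast
    have "\<chi> (s [^] d) \<noteq> 0" using ch d(2) unfolding is_char_def by auto
    then obtain c where c: "c ^ d = \<chi> (s [^] d)" using nth_root_exists d(1) by blast
    let ?H' = "{h \<otimes> s [^] j | h j. h \<in> H \<and> j < d}"
    from char_step[OF H ch s(1) d dmin c]
    obtain \<chi>' where sub': "subgroup ?H' G" and HH': "H \<subseteq> ?H'" and sH': "s \<in> ?H'"
      and ch': "is_char G ?H' \<chi>'" and val: "\<forall>h\<in>H. \<forall>j<d. \<chi>' (h \<otimes> s [^] j) = \<chi> h * c ^ j"
      by blast
    have "carrier G - ?H' \<subset> carrier G - H" using HH' sH' s by auto
    hence lt: "card (carrier G - ?H') < card (carrier G - H)" using fin by (intro psubset_card_mono) auto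
    obtain \<chi>'' where ch'': "is_char G (carrier G) \<chi>''" and ext: "\<forall>h\<in>?H'. \<chi>'' h = \<chi>' h"
      using less.hyps[OF lt sub' ch'] by blast
    have "\<forall>h\<in>H. \<chi>'' h = \<chi> h"
    proof
      fix h assume h: "h \<in> H"
      have hc: "h \<in> carrier G" using h subgroup.subset[OF H] by auto
      have "\<chi>' (h \<otimes> s [^] (0::nat)) = \<chi> h * c ^ 0" using val h d(1) by blast
      moreover have "h \<in> ?H'" using HH' h by blast
      ultimately show "\<chi>'' h = \<chi> h" using ext hc by simp
    qed
    thus ?thesis using ch'' by blast
  qed
qed

lemma chars_sep:
  assumes fin: "finite (carrier G)"
  shows "finite S \<Longrightarrow> S \<subseteq> carrier G \<Longrightarrow> \<exists>cs. length cs \<le> card S \<and> (\<forall>\<chi>\<in>set cs. is_char G (carrier G) \<chi>)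
     \<and> (\<forall>x\<in>generate G S. (\<forall>\<chi>\<in>set cs. \<chi> x = 1) \<longrightarrow> x = \<one>)"
proof (induct S rule: finite_induct)
  case empty thus ?case using generate_empty by (intro exI[of _ "[]"]) auto
next
  case (insert s S)
  have Sc: "S \<subseteq> carrier G" and sc: "s \<in> carrier G" using insert by auto
  obtain cs where cs: "length cs \<le> card S" "\<forall>\<chi>\<in>set cs. is_char G (carrier G) \<chi>"
    "\<forall>x\<in>generate G S. (\<forall>\<chi>\<in>set cs. \<chi> x = 1) \<longrightarrow> x = \<one>" using insert(3)[OF Sc] by blast
  define H where "H = generate G S"
  have H: "subgroup H G" unfolding H_def using generate_is_subgroup[OF Sc] .
  have triv: "is_char G H (\<lambda>_. 1)" unfolding is_char_def by simp
  obtain d :: nat where d: "0 < d" "s [^] d \<in> H" and dmin: "\<And>j::nat. 0 < j \<Longrightarrow> j < d \<Longrightarrow> s [^] j \<notin> H"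
    using least_pow[OF fin H sc] by blast
  define \<omega> where "\<omega> = cis (2 * pi / d)"
  have wd: "\<omega> ^ d = (\<lambda>_. 1::complex) (s [^] d)" using prim_root(1)[OF d(1)] unfolding \<omega>_def by simp
  let ?H' = "{h \<otimes> s [^] j | h j. h \<in> H \<and> j < d}"
  from char_step[OF H triv sc d dmin wd]
  obtain \<chi>' where sub': "subgroup ?H' G" and HH': "H \<subseteq> ?H'" and sH': "s \<in> ?H'"
    and ch': "is_char G ?H' \<chi>'" and val: "\<forall>h\<in>H. \<forall>j<d. \<chi>' (h \<otimes> s [^] j) = 1 * \<omega> ^ j"
    by blast
  obtain \<chi>'' where ch'': "is_char G (carrier G) \<chi>''" and ext: "\<forall>h\<in>?H'. \<chi>'' h = \<chi>' h"
    using char_extend[OF fin sub' ch'] by blast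
  show ?case
  proof (intro exI[of _ "\<chi>'' # cs"] conjI)
    show "length (\<chi>'' # cs) \<le> card (insert s S)" using cs(1) insert(1,2) by simp
    show "\<forall>\<chi>\<in>set (\<chi>'' # cs). is_char G (carrier G) \<chi>" using cs(2) ch'' by simp
    show "\<forall>x\<in>generate G (insert s S). (\<forall>\<chi>\<in>set (\<chi>'' # cs). \<chi> x = 1) \<longrightarrow> x = \<one>"
    proof (intro ballI impI)
      fix x assume x: "x \<in> generate G (insert s S)" and all: "\<forall>\<chi>\<in>set (\<chi>'' # cs). \<chi> x = 1"
      have "insert s S \<subseteq> ?H'" using sH' HH' generate.incl[of _ S G] unfolding H_def by blast
      hence "x \<in> ?H'" using generate_subgroup_incl[OF _ sub'] x by blast
      then obtain h j where h: "h \<in> H" and j: "j < d" and xe: "x = h \<otimes> s [^] j" by blast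
      have "\<omega> ^ j = 1" using all ext val h j xe \<open>x \<in> ?H'\<close> by auto
      hence "j = 0" using prim_root(2)[OF d(1), of j] j unfolding \<omega>_def by (cases "j = 0") auto
      hence "x = h" using xe h subgroup.subset[OF H] by auto
      hence "x \<in> generate G S" using h unfolding H_def by simp
      thus "x = \<one>" using cs(3) all by simp
    qed
  qed
qed

end



definition dmat :: "nat \<Rightarrow> (nat \<Rightarrow> complex) \<Rightarrow> complex mat" where
  "dmat n f = mat n n (\<lambda>(i,j). if i = j then f i else 0)"

lemma dmat_carrier[simp]: "dmat n f \<in> carrier_mat n n" unfolding dmat_def by simp

lemma dmat_mult: "dmat n f * dmat n g = dmat n (\<lambda>i. f i * g i)"
proof (rule eq_matI)
  fix i j assume i: "i < dim_row (dmat n (\<lambda>i. f i * g i))" and j: "j < dim_col (dmat n (\<lambda>i. f i * g i))"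
  hence i: "i < n" and j: "j < n" by (auto simp: dmat_def)
  have "(dmat n f * dmat n g) $$ (i,j) = (\<Sum>l\<in>{0..<n}. (if i = l then f i else 0) * (if l = j then g l else 0))"
    using i j by (simp add: dmat_def scalar_prod_def)
  also have "\<dots> = (\<Sum>l\<in>{0..<n}. (if l = i then (if i = j then f i * g i else 0) else 0))"
    by (rule sum.cong) auto
  also have "\<dots> = (if i = j then f i * g i else 0)" using i by (simp add: sum.delta)
  also have "\<dots> = dmat n (\<lambda>i. f i * g i) $$ (i,j)" using i j by (simp add: dmat_def)
  finally show "(dmat n f * dmat n g) $$ (i,j) = dmat n (\<lambda>i. f i * g i) $$ (i,j)" .
qed (auto simp: dmat_def)

lemma dmat_one: "dmat n (\<lambda>_. 1) = 1\<^sub>m n"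
  by (rule eq_matI) (auto simp: dmat_def)

lemma dmat_cong: "(\<And>i. i < n \<Longrightarrow> f i = g i) \<Longrightarrow> dmat n f = dmat n g"
  by (rule eq_matI) (auto simp: dmat_def)

lemma dmat_scalar: "dmat n f = c \<cdot>\<^sub>m 1\<^sub>m n \<Longrightarrow> i < n \<Longrightarrow> f i = c"
proof -
  assume e: "dmat n f = c \<cdot>\<^sub>m 1\<^sub>m n" and i: "i < n"
  have "dmat n f $$ (i,i) = (c \<cdot>\<^sub>m 1\<^sub>m n) $$ (i,i)" using e by simp
  thus ?thesis using i by (simp add: dmat_def)
qed

lemma upper_bound:
  fixes G :: "('a, 'b) monoid_scheme"
  assumes cg: "comm_group G" and fin: "finite (carrier G)" and S: "S \<subseteq> carrier G" "finite S"
    and gen: "generate G S = carrier G"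
  shows "\<exists>k\<le>card S. \<exists>\<rho>. faithful_proj_rep G (k + 1) \<rho>"
proof -
  interpret G: comm_group G by fact
  obtain cs where cs: "length cs \<le> card S" "\<forall>\<chi>\<in>set cs. is_char G (carrier G) \<chi>"
    "\<forall>x\<in>generate G S. (\<forall>\<chi>\<in>set cs. \<chi> x = 1) \<longrightarrow> x = \<one>\<^bsub>G\<^esub>"
    using G.chars_sep[OF fin S(2) S(1)] by blast
  define k where "k = length cs"
  define f where "f g i = (if i = 0 then 1 else (cs ! (i - 1)) g)" for g i
  define \<rho> where "\<rho> g = dmat (k + 1) (f g)" for g
  have chk: "\<And>i. i < k \<Longrightarrow> is_char G (carrier G) (cs ! i)" using cs(2) unfolding k_def by auto
  have fnz: "f g i \<noteq> 0" if g: "g \<in> carrier G" and i: "i < k + 1" for g i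
    using chk[of "i - 1"] g i unfolding f_def is_char_def by auto
  have fmul: "f (g \<otimes>\<^bsub>G\<^esub> h) i = f g i * f h i" if g: "g \<in> carrier G" and h: "h \<in> carrier G" and i: "i < k + 1" for g h i
    using chk[of "i - 1"] g h i unfolding f_def is_char_def by auto
  have f1: "f \<one>\<^bsub>G\<^esub> i = 1" if i: "i < k + 1" for i
  proof (cases "i = 0")
    case False
    hence "is_char G (carrier G) (cs ! (i - 1))" using chk i by simp
    thus ?thesis using G.char_one[OF G.subgroup_self] False unfolding f_def by simp
  qed (simp add: f_def)
  have coc: "cocycle2 G (\<lambda>_ _. 1)" unfolding cocycle2_def by simp
  have rep: "alpha_rep G (\<lambda>_ _. 1) (k + 1) \<rho>"
    unfolding alpha_rep_def
  proof (intro conjI ballI)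
    fix g assume g: "g \<in> carrier G"
    show "\<rho> g \<in> carrier_mat (k + 1) (k + 1)" unfolding \<rho>_def by simp
    have "\<rho> g * dmat (k + 1) (\<lambda>i. inverse (f g i)) = 1\<^sub>m (k + 1)"
      unfolding \<rho>_def dmat_mult using fnz[OF g] by (subst dmat_one[symmetric], intro dmat_cong) simp
    moreover have "dmat (k + 1) (\<lambda>i. inverse (f g i)) * \<rho> g = 1\<^sub>m (k + 1)"
      unfolding \<rho>_def dmat_mult using fnz[OF g] by (subst dmat_one[symmetric], intro dmat_cong) simp
    ultimately show "invertible_mat (\<rho> g)" unfolding invertible_mat_def inverts_mat_def square_mat.simps \<rho>_def
      by (intro conjI exI[of _ "dmat (k + 1) (\<lambda>i. inverse (f g i))"]) (auto simp: dmat_def)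
  next
    show "\<rho> \<one>\<^bsub>G\<^esub> = 1\<^sub>m (k + 1)" unfolding \<rho>_def using f1 by (subst dmat_one[symmetric], intro dmat_cong) simp
  next
    fix g h assume g: "g \<in> carrier G" and h: "h \<in> carrier G"
    show "\<rho> g * \<rho> h = 1 \<cdot>\<^sub>m \<rho> (g \<otimes>\<^bsub>G\<^esub> h)" unfolding \<rho>_def dmat_mult one_smult_mat'
      using fmul[OF g h] by (intro dmat_cong) simp
  qed
  have "faithful_proj_rep G (k + 1) \<rho>"
    unfolding faithful_proj_rep_def proj_rep_def
  proof (intro conjI exI[of _ "\<lambda>_ _. 1"] ballI impI)
    show "cocycle2 G (\<lambda>_ _. 1)" by fact
    show "alpha_rep G (\<lambda>_ _. 1) (k + 1) \<rho>" by fact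
    fix g assume g: "g \<in> carrier G" and "\<exists>c. \<rho> g = c \<cdot>\<^sub>m 1\<^sub>m (k + 1)"
    then obtain c where c: "dmat (k + 1) (f g) = c \<cdot>\<^sub>m 1\<^sub>m (k + 1)" unfolding \<rho>_def by auto
    have c1: "c = 1" using dmat_scalar[OF c, of 0] by (simp add: f_def)
    have "\<forall>\<chi>\<in>set cs. \<chi> g = 1"
    proof
      fix \<chi> assume "\<chi> \<in> set cs"
      then obtain i where i: "i < k" "\<chi> = cs ! i" unfolding k_def by (auto simp: in_set_conv_nth)
      have "f g (Suc i) = c" using dmat_scalar[OF c, of "Suc i"] i by simp
      thus "\<chi> g = 1" using i c1 by (simp add: f_def)
    qed
    thus "g = \<one>\<^bsub>G\<^esub>" using cs(3) g gen by auto
  qed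
  thus ?thesis using cs(1) unfolding k_def by blast
qed

lemma pow_gcd_one:
  fixes z :: complex
  assumes a: "z ^ a = 1" and b: "z ^ b = 1"
  shows "z ^ gcd a b = 1"
proof (cases "a = 0")
  case True thus ?thesis using b by simp
next
  case False
  obtain x y where xy: "a * x = b * y + gcd a b" using bezout_nat[OF False] by blast
  have "z ^ (a * x) = z ^ (b * y) * z ^ gcd a b" unfolding xy by (simp add: power_add)
  thus ?thesis using a b by (simp add: power_mult)
qed

lemma group_rank_le:
  "S \<subseteq> carrier G \<Longrightarrow> finite S \<Longrightarrow> generate G S = carrier G \<Longrightarrow> group_rank G \<le> card S"
  unfolding group_rank_def by (rule Least_le) auto

theorem lemma4p8:
  fixes G :: "('a, 'b) monoid_scheme" and p n :: nat
  assumes "comm_group G" and "finite (carrier G)"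
    and "prime p" and "\<exists>k. order G = p ^ k"
    and "carrier G \<noteq> {\<one>\<^bsub>G\<^esub>}"
    and "group_rank G = n" and "n \<le> p - 1"
  shows "tau G = n + 1"
proof -
  note cg = assms(1) and fin = assms(2) and pp = assms(3) and ntriv = assms(5)
    and rk = assms(6) and np = assms(7)
  interpret G: comm_group G by fact
  obtain k where ord: "order G = p ^ k" using assms(4) by blast
  have "\<exists>S. S \<subseteq> carrier G \<and> finite S \<and> card S = group_rank G \<and> generate G S = carrier G"
    unfolding group_rank_def
  proof (rule LeastI_ex)
    have "generate G (carrier G) = carrier G"
      using G.generate_incl[of "carrier G"] generate.incl[of _ "carrier G" G] by blast
    thus "\<exists>n S. S \<subseteq> carrier G \<and> finite S \<and> card S = n \<and> generate G S = carrier G" using fin by blast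
  qed
  then obtain S where S: "S \<subseteq> carrier G" "finite S" "card S = n" "generate G S = carrier G"
    using rk by blast
  obtain k0 \<rho>0 where k0: "k0 \<le> n" and fr0: "faithful_proj_rep G (k0 + 1) \<rho>0"
    using upper_bound[OF cg fin S(1,2,4)] S(3) by blast
  have p2: "p \<ge> 2" using pp by (simp add: prime_ge_2_nat)
  have lower: "n + 1 \<le> m" if fr: "faithful_proj_rep G m \<rho>" for m \<rho>
  proof (rule ccontr)
    assume "\<not> n + 1 \<le> m"
    hence mn: "m \<le> n" by simp
    from fr obtain \<alpha> where coc: "cocycle2 G \<alpha>" and rep: "alpha_rep G \<alpha> m \<rho>"
      and faith: "\<And>g. g \<in> carrier G \<Longrightarrow> (\<exists>c. \<rho> g = c \<cdot>\<^sub>m 1\<^sub>m m) \<Longrightarrow> g = \<one>\<^bsub>G\<^esub>"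
      unfolding faithful_proj_rep_def proj_rep_def by blast
    have m0: "0 < m"
    proof (rule ccontr)
      assume "\<not> 0 < m"
      hence m00: "m = 0" by simp
      have "carrier G \<subseteq> {\<one>\<^bsub>G\<^esub>}"
      proof
        fix g assume g: "g \<in> carrier G"
        have "\<rho> g \<in> carrier_mat 0 0" using rep g m00 unfolding alpha_rep_def by auto
        hence "\<rho> g = 1 \<cdot>\<^sub>m 1\<^sub>m m" using m00 by (intro eq_matI) auto
        thus "g \<in> {\<one>\<^bsub>G\<^esub>}" using faith[OF g] by auto
      qed
      thus False using ntriv G.one_closed by auto
    qed
    have mp: "m < p" using mn np p2 by simp
    have "\<not> p dvd m" using mp m0 by (auto dest: dvd_imp_le)
    hence "coprime p m" using prime_imp_coprime[OF pp] by blast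
    hence cop: "coprime m (p ^ k)" by (simp add: coprime_commute)
    have mpc: "c = 1" if c1: "c ^ m = 1" and c2: "c ^ order G = 1" for c :: complex
      using pow_gcd_one[OF c1, of "p ^ k"] c2 ord cop by simp
    have comm: "\<And>g h. g \<in> carrier G \<Longrightarrow> h \<in> carrier G \<Longrightarrow> \<rho> g * \<rho> h = \<rho> h * \<rho> g"
      using rep_commute[OF cg coc rep m0 mpc] by blast
    obtain S' where S': "S' \<subseteq> carrier G" "finite S'" "card S' \<le> m - 1" "generate G S' = carrier G"
      using proj_to_genuine[OF cg fin coc rep m0 comm faith] by blast
    have "group_rank G \<le> m - 1" using group_rank_le[OF S'(1,2,4)] S'(3) by simp
    thus False using rk mn m0 by simp
  qed
  have "n + 1 \<le> k0 + 1" using lower[OF fr0] .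
  hence "k0 = n" using k0 by simp
  hence fr: "faithful_proj_rep G (n + 1) \<rho>0" using fr0 by simp
  show ?thesis unfolding tau_def
    by (rule Least_equality) (use fr lower in auto)
qed


end
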